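(* Let $\pi$ be a probability distribution (posterior) on the set of density matrices whose support contains at least one mixed (non-pure) state. Then no pure state is a Bayes estimator for infidelity loss under $\pi$; i.e., no pure state $\sigma$ minimizes the posterior Bayes risk $\int \bigl(1-\mathrm{Tr}\sqrt{\sqrt{\rho}\,\sigma\sqrt{\rho}}\bigr)\,d\pi(\rho)$ over density matrices $\sigma$.
   Context: Fix a finite-dimensional Hilbert space; a density matrix is a positive semidefinite operator of trace one; it is pure if it has rank one and mixed otherwise. The infidelity loss is $F(\rho,\sigma)=1-\mathrm{Tr}\sqrt{\sqrt{\rho}\,\sigma\sqrt{\rho}}$. For a distribution $\pi$ over states, the Bayes estimator for infidelity is a density matrix minimizing the expected loss $\int F(\rho,\sigma)\,d\pi(\rho)$ over $\sigma$. *)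

theory Defs
  imports "HOL-Analysis.Analysis" "HOL-Probability.Probability"
begin

definition adjoint_mat :: "complex^'n^'n \<Rightarrow> complex^'n^'n" where
  "adjoint_mat A = (\<chi> i j. cnj (A $ j $ i))"

definition cinner :: "complex^'n \<Rightarrow> complex^'n \<Rightarrow> complex" where
  "cinner x y = (\<Sum>i\<in>UNIV. cnj (x $ i) * y $ i)"

definition psd :: "complex^'n^'n \<Rightarrow> bool" where
  "psd A \<longleftrightarrow> adjoint_mat A = A \<and> (\<forall>x. 0 \<le> Re (cinner x (A *v x)))"

definition density_matrix :: "complex^'n^'n \<Rightarrow> bool" where
  "density_matrix \<rho> \<longleftrightarrow> psd \<rho> \<and> trace \<rho> = 1"

definition pure_state :: "complex^'n^'n \<Rightarrow> bool" where
  "pure_state \<rho> \<longleftrightarrow> density_matrix \<rho> \<and> rank \<rho> = 1"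

definition mixed_state :: "complex^'n^'n \<Rightarrow> bool" where
  "mixed_state \<rho> \<longleftrightarrow> density_matrix \<rho> \<and> rank \<rho> \<noteq> 1"

text \<open>The (unique) positive semidefinite square root of a psd matrix;
  set to 0 outside the psd cone (never used there).\<close>
definition msqrt :: "complex^'n^'n \<Rightarrow> complex^'n^'n" where
  "msqrt A = (if psd A then (THE B. psd B \<and> B ** B = A) else 0)"

text \<open>Infidelity loss F(rho,sigma) = 1 - Tr sqrt(sqrt rho sigma sqrt rho)
  (the trace is real; we take its real part).\<close>
definition infidelity :: "complex^'n^'n \<Rightarrow> complex^'n^'n \<Rightarrow> real" where
  "infidelity \<rho> \<sigma> = 1 - Re (trace (msqrt (msqrt \<rho> ** \<sigma> ** msqrt \<rho>)))"

definition bayes_risk :: "(complex^'n^'n) measure \<Rightarrow> complex^'n^'n \<Rightarrow> real" where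
  "bayes_risk M \<sigma> = (\<integral>\<rho>. infidelity \<rho> \<sigma> \<partial>M)"

definition bayes_estimator :: "(complex^'n^'n) measure \<Rightarrow> complex^'n^'n \<Rightarrow> bool" where
  "bayes_estimator M \<sigma> \<longleftrightarrow> density_matrix \<sigma> \<and>
     (\<forall>\<tau>. density_matrix \<tau> \<longrightarrow> bayes_risk M \<sigma> \<le> bayes_risk M \<tau>)"

definition measure_support :: "('a::topological_space) measure \<Rightarrow> 'a set" where
  "measure_support M = {x. \<forall>U. open U \<and> x \<in> U \<longrightarrow> emeasure M U > 0}"

end

theory Submission
  imports Defs
begin

definition outer :: "complex^'n \<Rightarrow> complex^'n \<Rightarrow> complex^'n^'n" where
  "outer u v = (\<chi> i j. u$i * cnj (v$j))"

lemma cinner_add_right: "cinner x (y + z) = cinner x y + cinner x z"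
  by (simp add: cinner_def distrib_left sum.distrib)
lemma cinner_add_left: "cinner (x + y) z = cinner x z + cinner y z"
  by (simp add: cinner_def distrib_right sum.distrib)
lemma cinner_diff_right: "cinner x (y - z) = cinner x y - cinner x z"
  by (simp add: cinner_def right_diff_distrib sum_subtractf)
lemma cinner_diff_left: "cinner (x - y) z = cinner x z - cinner y z"
  by (simp add: cinner_def left_diff_distrib sum_subtractf)
lemma cinner_scale_right: "cinner x (c *s y) = c * cinner x y"
  by (simp add: cinner_def sum_distrib_left algebra_simps)
lemma cinner_scale_left: "cinner (c *s x) y = cnj c * cinner x y"
  by (simp add: cinner_def sum_distrib_left algebra_simps)
lemma cinner_zero_right[simp]: "cinner x 0 = 0" by (simp add: cinner_def)
lemma cinner_zero_left[simp]: "cinner 0 x = 0" by (simp add: cinner_def)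
lemma cinner_commute: "cinner y x = cnj (cinner x y)"
  by (simp add: cinner_def mult.commute)
lemma cinner_sum_right: "cinner x (sum f S) = (\<Sum>i\<in>S. cinner x (f i))"
  unfolding cinner_def by (simp add: sum_distrib_left sum_component) (rule sum.swap)
lemma cinner_sum_left: "cinner (sum f S) x = (\<Sum>i\<in>S. cinner (f i) x)"
  unfolding cinner_def by (simp add: sum_distrib_right sum_component cnj_sum) (rule sum.swap)

lemma cinner_self: "cinner x x = of_real (\<Sum>i\<in>UNIV. (cmod (x$i))^2)"
  unfolding cinner_def of_real_sum by (rule sum.cong) (auto simp: mult.commute[of "cnj _"] complex_norm_square[symmetric])
lemma cinner_self_Re: "Re (cinner x x) = (norm x)^2"
  by (simp add: cinner_self norm_vec_def L2_set_def sum_nonneg)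
lemma cinner_self_real: "cinner x x = of_real ((norm x)^2)"
  by (metis cinner_self cinner_self_Re Re_complex_of_real)
lemma cinner_self_eq0: "cinner x x = 0 \<longleftrightarrow> x = 0"
  by (simp add: cinner_self_real)

lemma cinner_adj: "cinner x (A *v y) = cinner (adjoint_mat A *v x) y"
  unfolding cinner_def adjoint_mat_def matrix_vector_mult_def
  by (simp add: sum_distrib_left sum_distrib_right cnj_sum mult.assoc mult.left_commute)
     (rule sum.swap)

lemma herm_cinner: "adjoint_mat A = A \<Longrightarrow> cinner x (A *v y) = cinner (A *v x) y"
  by (metis cinner_adj)

lemma herm_real: "adjoint_mat A = A \<Longrightarrow> cinner x (A *v x) = of_real (Re (cinner x (A *v x)))"
proof -
  assume h: "adjoint_mat A = A"
  have "cnj (cinner x (A *v x)) = cinner x (A *v x)"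
    by (metis cinner_commute herm_cinner[OF h])
  then show ?thesis by (metis Reals_cnj_iff of_real_Re)
qed

lemma outer_mult_vec: "outer u v *v x = cinner v x *s u"
  by (simp add: outer_def matrix_vector_mult_def cinner_def vec_eq_iff sum_distrib_left mult.assoc mult.commute mult.left_commute)

lemma trace_outer: "trace (outer u v) = cinner v u"
  by (simp add: trace_def outer_def cinner_def mult.commute)

lemma adjoint_outer: "adjoint_mat (outer u v) = outer v u"
  by (simp add: adjoint_mat_def outer_def vec_eq_iff mult.commute)

lemma outer_mult: "outer u v ** outer w z = outer (cinner v w *s u) z"
  by (simp add: matrix_eq matrix_vector_mul_assoc[symmetric] outer_mult_vec cinner_scale_right
      vec_eq_iff algebra_simps)

lemma mat_eqI: "(\<And>x. (A::complex^'n^'n) *v x = B *v x) \<Longrightarrow> A = B"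
  by (simp add: matrix_eq)

lemma adjoint_adjoint[simp]: "adjoint_mat (adjoint_mat A) = A"
  by (simp add: adjoint_mat_def vec_eq_iff)

lemma adjoint_add: "adjoint_mat (A + B) = adjoint_mat A + adjoint_mat B"
  by (simp add: adjoint_mat_def vec_eq_iff)

lemma adjoint_mult: "adjoint_mat (A ** B) = adjoint_mat B ** adjoint_mat A"
  by (simp add: adjoint_mat_def vec_eq_iff matrix_matrix_mult_def cnj_sum mult.commute)

lemma cinner_mat_vec_add: "(A + B) *v x = A *v x + B *v x"
  by (simp add: matrix_vector_mult_def vec_eq_iff algebra_simps sum.distrib)

definition herm :: "complex^'n^'n \<Rightarrow> bool" where "herm A \<longleftrightarrow> adjoint_mat A = A"

lemma inner_vec_cinner: "(x::complex^'n) \<bullet> y = Re (cinner x y)"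
  by (simp add: inner_vec_def cinner_def inner_complex_def)

lemma scaleR_nth: "((c *\<^sub>R x)::complex^'n) $ i = of_real c * x $ i"
  by (subst vector_scaleR_component) (simp add: scaleR_conv_of_real)
lemma scaleR_nth2: "((c *\<^sub>R A)::complex^'n^'m) $ i $ j = of_real c * A $ i $ j"
  by (subst vector_scaleR_component)+ (simp add: scaleR_conv_of_real)

lemma cinner_scaleR_right: "cinner x (c *\<^sub>R y) = of_real c * cinner x y"
  by (simp add: cinner_def sum_distrib_left algebra_simps scaleR_nth scaleR_nth2 del: vector_scaleR_component)
lemma cinner_scaleR_left: "cinner (c *\<^sub>R x) y = of_real c * cinner x y"
  by (simp add: cinner_def sum_distrib_left algebra_simps scaleR_nth scaleR_nth2 del: vector_scaleR_component)
lemma mat_vec_scaleR: "(A::complex^'n^'n) *v (c *\<^sub>R x) = c *\<^sub>R (A *v x)"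
  by (simp add: matrix_vector_mult_def vec_eq_iff sum_distrib_left algebra_simps scaleR_nth scaleR_nth2 del: vector_scaleR_component)
lemma scaleR_mat_vec: "((c *\<^sub>R A)::complex^'n^'n) *v x = c *\<^sub>R (A *v x)"
  by (simp add: matrix_vector_mult_def vec_eq_iff sum_distrib_left algebra_simps scaleR_nth scaleR_nth2 del: vector_scaleR_component)
lemma mat_vec_add: "(A::complex^'n^'n) *v (x + y) = A *v x + A *v y"
  by (simp add: matrix_vector_right_distrib)
lemma mat_vec_diff: "(A::complex^'n^'n) *v (x - y) = A *v x - A *v y"
  by (simp add: matrix_vector_mult_diff_distrib)
lemma sum_mat_vec: "(sum f S :: complex^'n^'n) *v x = (\<Sum>i\<in>S. f i *v x)"
  by (induction S rule: infinite_finite_induct) (auto simp: cinner_mat_vec_add)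
lemma mat_vec_sum: "(A::complex^'n^'n) *v (sum f S) = (\<Sum>i\<in>S. A *v f i)"
  by (induction S rule: infinite_finite_induct) (auto simp: mat_vec_add)
lemma mat_vec_smult: "(A::complex^'n^'n) *v (c *s x) = c *s (A *v x)"
  by (rule vector_scalar_commute)

lemma ortho_exists:
  fixes E :: "(complex^'n) set"
  assumes fin: "finite E" and card: "card E < CARD('n)"
  shows "\<exists>x. x \<noteq> 0 \<and> (\<forall>e\<in>E. cinner e x = 0)"
proof -
  define F where "F = E \<union> (\<lambda>e. \<i> *s e) ` E"
  have finF: "finite F" using fin by (simp add: F_def)
  have "card F \<le> card E + card ((\<lambda>e. \<i> *s e) ` E)" unfolding F_def by (rule card_Un_le)
  also have "\<dots> \<le> card E + card E" using card_image_le[OF fin] by simp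
  finally have cF: "card F \<le> 2 * card E" by simp
  have "dim F \<le> card F" by (rule dim_le_card'[OF finF])
  moreover have "DIM(complex^'n) = 2 * CARD('n)" by simp
  ultimately have "dim F < DIM(complex^'n)" using cF card by linarith
  then obtain x :: "complex^'n" where x0: "x \<noteq> 0" and orth: "\<And>y. y \<in> span F \<Longrightarrow> orthogonal x y"
    using orthogonal_to_subspace_exists by blast
  have "\<forall>e\<in>E. cinner e x = 0"
  proof
    fix e assume eE: "e \<in> E"
    have "e \<in> span F" "\<i> *s e \<in> span F" using eE by (auto simp: F_def intro: span_base)
    then have "orthogonal x e" "orthogonal x (\<i> *s e)" using orth by auto
    then have r1: "Re (cinner e x) = 0" and r2: "Re (cinner (\<i> *s e) x) = 0"
      by (simp_all add: orthogonal_def inner_commute[of x] inner_vec_cinner)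
         (metis cinner_commute complex_cnj(1) cnj.sel(1))+
    from r2 have "Im (cinner e x) = 0" by (simp add: cinner_scale_left)
    with r1 show "cinner e x = 0" by (simp add: complex_eq_iff)
  qed
  with x0 show ?thesis by blast
qed

lemma cont_quad: "continuous_on S (\<lambda>x::complex^'n. Re (cinner x (A *v x)))"
  unfolding cinner_def matrix_vector_mult_def vec_lambda_beta by (intro continuous_intros)

lemma cont_cinner: "continuous_on S (\<lambda>x::complex^'n. cinner e x)"
  unfolding cinner_def by (intro continuous_intros)

lemma norm_cinner: "norm x = sqrt (Re (cinner x x))"
  by (simp add: cinner_self_Re)

lemma eigvec_exists:
  fixes A :: "complex^'n^'n" and E :: "(complex^'n) set"
  assumes h: "herm A" and fin: "finite E" and card: "card E < CARD('n)"
    and eig: "\<And>e. e \<in> E \<Longrightarrow> \<exists>l::real. A *v e = l *\<^sub>R e"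
  shows "\<exists>x l. cinner x x = 1 \<and> (\<forall>e\<in>E. cinner e x = 0) \<and> A *v x = l *\<^sub>R x"
proof -
  have hA: "adjoint_mat A = A" using h by (simp add: herm_def)
  define q where "q = (\<lambda>x::complex^'n. Re (cinner x (A *v x)))"
  define V where "V = (\<Inter>e\<in>E. {x::complex^'n. cinner e x = 0}) \<inter> sphere 0 1"
  have cl: "closed (\<Inter>e\<in>E. {x::complex^'n. cinner e x = 0})"
    by (intro closed_INT ballI closed_Collect_eq continuous_on_const cont_cinner)
  have compV: "compact V" unfolding V_def by (rule closed_Int_compact[OF cl compact_sphere])
  obtain x0 where x0: "x0 \<noteq> 0" "\<forall>e\<in>E. cinner e x0 = 0" using ortho_exists[OF fin card] by blast
  have "(1 / norm x0) *\<^sub>R x0 \<in> V" using x0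
    by (auto simp: V_def cinner_scaleR_right)
  then have Vne: "V \<noteq> {}" by blast
  obtain x where xV: "x \<in> V" and xmax: "\<forall>y\<in>V. q y \<le> q x"
    using continuous_attains_sup[OF compV Vne, of q] cont_quad unfolding q_def by blast
  have nx: "norm x = 1" and xE: "\<forall>e\<in>E. cinner e x = 0" using xV by (auto simp: V_def)
  have xx: "cinner x x = 1" using nx by (simp add: cinner_self_real)
  define l where "l = q x"
  have xAx: "cinner x (A *v x) = of_real l" unfolding l_def q_def by (rule herm_real[OF hA])
  define w where "w = A *v x - l *\<^sub>R x"
  have Ax: "A *v x = w + l *\<^sub>R x" by (simp add: w_def)
  have wx: "cinner x w = 0" by (simp add: w_def cinner_diff_right cinner_scaleR_right xAx xx)
  have xw: "cinner w x = 0" using wx by (metis cinner_commute complex_cnj_zero)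
  have wE: "cinner e w = 0" if eE: "e \<in> E" for e
  proof -
    obtain le where le: "A *v e = le *\<^sub>R e" using eig[OF eE] by blast
    have "cinner e (A *v x) = cinner (A *v e) x" by (rule herm_cinner[OF hA])
    also have "\<dots> = 0" using xE eE by (simp add: le cinner_scaleR_left)
    finally show ?thesis using xE eE by (simp add: w_def cinner_diff_right cinner_scaleR_right)
  qed
  have "w = 0"
  proof (rule ccontr)
    assume w0: "w \<noteq> 0"
    define a where "a = Re (cinner w w)"
    have a: "a > 0" using w0 by (simp add: a_def cinner_self_Re)
    have ww: "cinner w w = of_real a" by (simp add: a_def cinner_self_real)
    define b where "b = Re (cinner w (A *v w))"
    have wAw: "cinner w (A *v w) = of_real b" unfolding b_def by (rule herm_real[OF hA])
    have wAx: "cinner w (A *v x) = of_real a"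
      by (simp add: Ax cinner_add_right cinner_scaleR_right ww xw)
    have xAw: "cinner x (A *v w) = of_real a"
      by (simp add: herm_cinner[OF hA] Ax cinner_add_left cinner_scaleR_left ww wx)
    define t where "t = a / (\<bar>l*a - b\<bar> + 1)"
    have t: "t > 0" using a by (simp add: t_def)
    define y where "y = x + t *\<^sub>R w"
    have yy: "cinner y y = of_real (1 + t^2 * a)"
      by (simp add: y_def cinner_add_left cinner_add_right cinner_scaleR_left cinner_scaleR_right
          xx wx xw ww power2_eq_square)
    have yAy: "cinner y (A *v y) = of_real (l + 2*t*a + t^2 * b)"
      by (simp add: y_def mat_vec_add mat_vec_scaleR cinner_add_left cinner_add_right
          cinner_scaleR_left cinner_scaleR_right xAx wAx xAw wAw power2_eq_square algebra_simps)
    define n where "n = 1 + t^2 * a"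
    have n: "n > 0" using a by (simp add: n_def add_pos_nonneg)
    have ny: "norm y = sqrt n" using yy by (simp add: norm_cinner n_def)
    define z where "z = (1 / sqrt n) *\<^sub>R y"
    have "z \<in> V"
    proof -
      have "cinner e z = 0" if "e \<in> E" for e
        using xE wE that by (simp add: z_def y_def cinner_add_right cinner_scaleR_right)
      moreover have "norm z = 1" using n by (simp add: z_def ny)
      ultimately show ?thesis by (simp add: V_def)
    qed
    then have "q z \<le> l" using xmax by (simp add: l_def)
    moreover have "q z = (l + 2*t*a + t^2 * b) / n"
      using n by (simp add: q_def z_def mat_vec_scaleR cinner_scaleR_left cinner_scaleR_right yAy)
    ultimately have "(l + 2*t*a + t^2 * b) / n \<le> l" by simp
    then have "l + 2*t*a + t^2 * b \<le> l * n" using n by (simp add: divide_le_eq)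
    then have "2*t*a \<le> t * (t * (l*a - b))" by (simp add: n_def algebra_simps power2_eq_square)
    then have "2*a \<le> t * (l*a - b)" using t by simp
    also have "\<dots> \<le> t * \<bar>l*a - b\<bar>" using t by (simp add: mult_left_mono)
    also have "\<dots> < a"
    proof -
      have "t * \<bar>l*a - b\<bar> = a * (\<bar>l*a - b\<bar> / (\<bar>l*a - b\<bar> + 1))" by (simp add: t_def)
      also have "\<dots> < a * 1" using a by (intro mult_strict_left_mono) auto
      finally show ?thesis by simp
    qed
    finally show False using a by simp
  qed
  then have "A *v x = l *\<^sub>R x" by (simp add: Ax)
  with xx xE show ?thesis by blast
qed

lemma eigbasis_set:
  fixes A :: "complex^'n^'n"
  assumes h: "herm A"
  shows "k \<le> CARD('n) \<Longrightarrow> \<exists>E. finite E \<and> card E = k \<and>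
     (\<forall>e\<in>E. cinner e e = 1 \<and> (\<exists>l::real. A *v e = l *\<^sub>R e)) \<and>
     (\<forall>e\<in>E. \<forall>f\<in>E. e \<noteq> f \<longrightarrow> cinner e f = 0)"
proof (induction k)
  case 0
  show ?case by (rule exI[of _ "{}"]) simp
next
  case (Suc k)
  then obtain E where E: "finite E" "card E = k"
    "\<forall>e\<in>E. cinner e e = 1 \<and> (\<exists>l::real. A *v e = l *\<^sub>R e)"
    "\<forall>e\<in>E. \<forall>f\<in>E. e \<noteq> f \<longrightarrow> cinner e f = 0" by auto
  have "card E < CARD('n)" using Suc.prems E(2) by simp
  then obtain x l where x: "cinner x x = 1" "\<forall>e\<in>E. cinner e x = 0" "A *v x = l *\<^sub>R x"
    using eigvec_exists[OF h E(1)] E(3) by blast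
  have xE: "x \<notin> E" using x(1,2) by force
  have ex: "cinner x e = 0" if "e \<in> E" for e using x(2) that by (metis cinner_commute complex_cnj_zero)
  show ?case
    apply (rule exI[of _ "insert x E"])
    using E xE x ex by auto
qed

lemma spectral:
  fixes A :: "complex^'n^'n"
  assumes h: "herm A"
  obtains u :: "'n \<Rightarrow> complex^'n" and d :: "'n \<Rightarrow> real"
  where "\<And>i j. cinner (u i) (u j) = (if i = j then 1 else 0)" "\<And>i. A *v u i = d i *\<^sub>R u i"
proof -
  obtain E where E: "finite E" "card E = CARD('n)"
    "\<forall>e\<in>E. cinner e e = 1 \<and> (\<exists>l::real. A *v e = l *\<^sub>R e)"
    "\<forall>e\<in>E. \<forall>f\<in>E. e \<noteq> f \<longrightarrow> cinner e f = 0" using eigbasis_set[OF h, of "CARD('n)"] by auto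
  obtain g where g: "bij_betw g (UNIV::'n set) E"
    using finite_same_card_bij[OF finite E(1)] E(2) by auto
  have gE: "g i \<in> E" for i using g by (auto simp: bij_betw_def)
  have ginj: "g i = g j \<Longrightarrow> i = j" for i j using g by (auto simp: bij_betw_def inj_def)
  have "\<forall>i. \<exists>l::real. A *v g i = l *\<^sub>R g i" using E(3) gE by blast
  then obtain d where d: "\<And>i. A *v g i = d i *\<^sub>R g i" by metis
  show ?thesis
  proof (rule that[of g d])
    fix i j show "cinner (g i) (g j) = (if i = j then 1 else 0)"
      using E(3,4) gE ginj by (metis (full_types))
  qed (rule d)
qed

definition colmat :: "('n \<Rightarrow> complex^'n) \<Rightarrow> complex^'n^'n" where
  "colmat u = (\<chi> r c. u c $ r)"

lemma complete_onb:
  fixes u :: "'n \<Rightarrow> complex^'n"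
  assumes on: "\<And>i j. cinner (u i) (u j) = (if i = j then 1 else 0)"
  shows "x = (\<Sum>i\<in>UNIV. cinner (u i) x *s u i)"
proof -
  have "adjoint_mat (colmat u) ** colmat u = mat 1"
    using on by (simp add: adjoint_mat_def colmat_def matrix_matrix_mult_def mat_def vec_eq_iff cinner_def)
  then have "colmat u ** adjoint_mat (colmat u) = mat 1" by (simp add: matrix_left_right_inverse)
  then have "x = colmat u *v (adjoint_mat (colmat u) *v x)"
    by (simp add: matrix_vector_mul_assoc)
  also have "\<dots> = (\<Sum>i\<in>UNIV. cinner (u i) x *s u i)"
    by (simp add: colmat_def adjoint_mat_def matrix_vector_mult_def vec_eq_iff cinner_def sum_component mult.commute)
  finally show ?thesis .
qed

lemma onb_mat_eq:
  fixes M N :: "complex^'n^'n" and u :: "'n \<Rightarrow> complex^'n"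
  assumes on: "\<And>i j. cinner (u i) (u j) = (if i = j then 1 else 0)"
    and eq: "\<And>j. M *v u j = N *v u j"
  shows "M = N"
proof (rule mat_eqI)
  fix x
  have "M *v x = M *v (\<Sum>i\<in>UNIV. cinner (u i) x *s u i)" using complete_onb[OF on] by metis
  also have "\<dots> = (\<Sum>i\<in>UNIV. cinner (u i) x *s (N *v u i))" by (simp add: mat_vec_sum mat_vec_smult eq)
  also have "\<dots> = N *v (\<Sum>i\<in>UNIV. cinner (u i) x *s u i)" by (simp add: mat_vec_sum mat_vec_smult)
  also have "\<dots> = N *v x" using complete_onb[OF on] by metis
  finally show "M *v x = N *v x" .
qed

lemma psd_herm: "psd A \<Longrightarrow> herm A" by (simp add: psd_def herm_def)
lemma psd_quad: "psd A \<Longrightarrow> 0 \<le> Re (cinner x (A *v x))" by (simp add: psd_def)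

lemma adjoint_sum: "adjoint_mat (sum f S) = (\<Sum>i\<in>S. adjoint_mat (f i))"
  by (induction S rule: infinite_finite_induct) (auto simp: adjoint_add adjoint_mat_def vec_eq_iff)
lemma adjoint_scaleR: "adjoint_mat (c *\<^sub>R A) = c *\<^sub>R adjoint_mat A"
  by (simp add: adjoint_mat_def vec_eq_iff scaleR_nth2)

lemma scaleR_smult: "c *\<^sub>R (z *s (v::complex^'n)) = (of_real c * z) *s v"
  by (simp add: vec_eq_iff scaleR_nth del: vector_scaleR_component)

lemma mult_self_cnj_Re: "0 \<le> Re (z * cnj z)"
  by (simp add: complex_norm_square[symmetric])

lemma sqrt_exists_unique:
  fixes A :: "complex^'n^'n"
  assumes p: "psd A"
  shows "\<exists>!S. psd S \<and> S ** S = A"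
proof -
  have h: "herm A" using p by (rule psd_herm)
  have hA: "adjoint_mat A = A" using h by (simp add: herm_def)
  obtain u :: "'n \<Rightarrow> complex^'n" and d :: "'n \<Rightarrow> real"
    where on: "\<And>i j. cinner (u i) (u j) = (if i = j then 1 else 0)"
    and ev: "\<And>i. A *v u i = d i *\<^sub>R u i" using spectral[OF h] by blast
  have d0: "0 \<le> d i" for i
    using psd_quad[OF p, of "u i"] by (simp add: ev cinner_scaleR_right on)
  define S where "S = (\<Sum>i\<in>UNIV. sqrt (d i) *\<^sub>R outer (u i) (u i))"
  have Su: "S *v u j = sqrt (d j) *\<^sub>R u j" for j
  proof -
    have "S *v u j = (\<Sum>i\<in>UNIV. sqrt (d i) *\<^sub>R (cinner (u i) (u j) *s u i))"
      by (simp add: S_def sum_mat_vec scaleR_mat_vec outer_mult_vec)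
    also have "\<dots> = (\<Sum>i\<in>UNIV. if i = j then sqrt (d j) *\<^sub>R u j else 0)"
      by (rule sum.cong) (auto simp: on)
    also have "\<dots> = sqrt (d j) *\<^sub>R u j" by simp
    finally show ?thesis .
  qed
  have SS: "S ** S = A"
    by (rule onb_mat_eq[OF on]) (simp add: matrix_vector_mul_assoc[symmetric] Su mat_vec_scaleR ev d0)
  have hS: "adjoint_mat S = S"
    by (simp add: S_def adjoint_sum adjoint_scaleR adjoint_outer)
  have qS: "0 \<le> Re (cinner x (S *v x))" for x
  proof -
    have "cinner x (S *v x) = (\<Sum>i\<in>UNIV. of_real (sqrt (d i)) * (cinner (u i) x * cnj (cinner (u i) x)))"
      by (simp add: S_def sum_mat_vec scaleR_mat_vec outer_mult_vec cinner_sum_right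
          cinner_scaleR_right cinner_scale_right cinner_commute[of x "u _"] mult.assoc)
    then show ?thesis
      by (simp add: sum_nonneg d0 mult_nonneg_nonneg mult_self_cnj_Re del: complex_In_mult_cnj_zero)
  qed
  have pS: "psd S" using hS qS by (simp add: psd_def)
  have uniq: "T = S" if pT: "psd T" and TT: "T ** T = A" for T
  proof (rule onb_mat_eq[OF on])
    fix j
    have hT: "adjoint_mat T = T" using pT by (simp add: psd_def)
    define v where "v = u j"
    define m where "m = d j"
    have TTv: "T *v (T *v v) = m *\<^sub>R v" using TT by (simp add: matrix_vector_mul_assoc v_def m_def ev)
    have "T *v v = sqrt m *\<^sub>R v"
    proof (cases "m = 0")
      case True
      have "cinner (T *v v) (T *v v) = cinner v (T *v (T *v v))" by (simp add: herm_cinner[OF hT])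
      also have "\<dots> = 0" by (simp add: TTv True)
      finally show ?thesis using True by (simp add: cinner_self_eq0)
    next
      case False
      then have m: "m > 0" using d0[of j] by (simp add: m_def)
      define g where "g = T *v v - sqrt m *\<^sub>R v"
      have Tg: "T *v g = (- sqrt m) *\<^sub>R g"
        using m by (simp add: g_def mat_vec_diff mat_vec_scaleR TTv algebra_simps)
      have "0 \<le> Re (cinner g (T *v g))" using psd_quad[OF pT] .
      also have "\<dots> = - sqrt m * Re (cinner g g)" by (simp add: Tg cinner_scaleR_right del: scaleR_minus_left)
      finally have "Re (cinner g g) \<le> 0" using m by (simp add: mult_le_0_iff)
      then have "g = 0" by (simp add: cinner_self_Re)
      then show ?thesis by (simp add: g_def)
    qed
    then show "T *v u j = S *v u j" by (simp add: v_def m_def Su)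
  qed
  show ?thesis using pS SS uniq by blast
qed

lemma msqrt_props:
  assumes "psd A" shows "psd (msqrt A)" "msqrt A ** msqrt A = A"
proof -
  have "psd (msqrt A) \<and> msqrt A ** msqrt A = A"
    unfolding msqrt_def using assms theI'[OF sqrt_exists_unique[OF assms]] by simp
  then show "psd (msqrt A)" "msqrt A ** msqrt A = A" by auto
qed

lemma msqrt_unique:
  assumes "psd A" "psd S" "S ** S = A" shows "msqrt A = S"
  unfolding msqrt_def using assms the1_equality[OF sqrt_exists_unique[OF assms(1)]] by simp

lemma cinner_outer_quad: "cinner x (outer w w *v x) = cinner w x * cnj (cinner w x)"
  by (simp add: outer_mult_vec cinner_scale_right cinner_commute[of x w] mult.commute)

lemma psd_outer: "psd (outer w w)"
  by (simp add: psd_def adjoint_outer cinner_outer_quad mult_self_cnj_Re)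

lemma psd_scaleR: "psd A \<Longrightarrow> 0 \<le> c \<Longrightarrow> psd (c *\<^sub>R A)"
  by (simp add: psd_def adjoint_scaleR scaleR_mat_vec cinner_scaleR_right)

lemma psd_add: "psd A \<Longrightarrow> psd B \<Longrightarrow> psd (A + B)"
  by (simp add: psd_def adjoint_add cinner_mat_vec_add cinner_add_right)

lemma psd_zero: "psd (0::complex^'n^'n)"
  by (simp add: psd_def adjoint_mat_def vec_eq_iff)

lemma mat_mult_scaleR_left: fixes A B :: "complex^'n^'n" shows "(c *\<^sub>R A) ** B = c *\<^sub>R (A ** B)"
  by (rule mat_eqI) (simp add: matrix_vector_mul_assoc[symmetric] scaleR_mat_vec)
lemma mat_mult_scaleR_right: fixes A B :: "complex^'n^'n" shows "A ** (c *\<^sub>R B) = c *\<^sub>R (A ** B)"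
  by (rule mat_eqI) (simp add: matrix_vector_mul_assoc[symmetric] scaleR_mat_vec mat_vec_scaleR)

lemma outer_scaleR_left: "outer (c *\<^sub>R u) v = c *\<^sub>R outer u v"
  by (simp add: outer_def vec_eq_iff scaleR_nth scaleR_nth2 del: vector_scaleR_component)
lemma outer_ofreal_left: "outer (complex_of_real c *s u) v = c *\<^sub>R outer u v"
  by (simp add: outer_def vec_eq_iff scaleR_nth2 del: vector_scaleR_component)

lemma msqrt_zero: "msqrt (0::complex^'n^'n) = 0"
  by (rule msqrt_unique[OF psd_zero psd_zero]) simp

lemma msqrt_outer: "msqrt (outer w w) = (1 / norm w) *\<^sub>R outer w w"
proof (cases "w = 0")
  case True
  have "outer w w = 0" using True by (simp add: outer_def vec_eq_iff)
  then show ?thesis by (simp add: msqrt_zero)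
next
  case False
  then have n: "norm w > 0" by simp
  show ?thesis
  proof (rule msqrt_unique[OF psd_outer])
    show "psd ((1 / norm w) *\<^sub>R outer w w)" by (rule psd_scaleR[OF psd_outer]) simp
    have "outer w w ** outer w w = (norm w)^2 *\<^sub>R outer w w"
      by (simp only: outer_mult cinner_self_real outer_ofreal_left)
    then show "(1 / norm w) *\<^sub>R outer w w ** (1 / norm w) *\<^sub>R outer w w = outer w w"
      using n by (simp add: mat_mult_scaleR_left mat_mult_scaleR_right power2_eq_square)
  qed
qed

lemma trace_scaleR: "trace (c *\<^sub>R (A::complex^'n^'n)) = of_real c * trace A"
  by (simp add: trace_def scaleR_nth2 sum_distrib_left del: vector_scaleR_component)

lemma trace_msqrt_outer: "Re (trace (msqrt (outer w w))) = norm w"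
proof (cases "w = 0")
  case True
  have "outer w w = 0" using True by (simp add: outer_def vec_eq_iff)
  then show ?thesis using True by (simp add: msqrt_zero trace_def)
next
  case False
  then show ?thesis
    by (simp add: msqrt_outer trace_scaleR trace_outer cinner_self_real power2_eq_square)
qed

lemma scal_id1:
  fixes p q d t r rc al be :: complex
  assumes R: "r*rc = p*q - d^2" and T: "t^2 = p+q+2*d" and d: "d \<noteq> 0" and t: "t \<noteq> 0"
  shows "(q+d)/(d*t) * (((q+d)/(d*t)*al + (-r/(d*t))*be)*p + ((-rc/(d*t))*al + (p+d)/(d*t)*be)*r)
       + (-r/(d*t)) * (((q+d)/(d*t)*al + (-r/(d*t))*be)*rc + ((-rc/(d*t))*al + (p+d)/(d*t)*be)*q) = al"
proof -
  have "(q+d)/(d*t) * (((q+d)/(d*t)*al + (-r/(d*t))*be)*p + ((-rc/(d*t))*al + (p+d)/(d*t)*be)*r)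
       + (-r/(d*t)) * (((q+d)/(d*t)*al + (-r/(d*t))*be)*rc + ((-rc/(d*t))*al + (p+d)/(d*t)*be)*q)
     = ((q+d)*((q+d)*al*p - r*be*p - r*rc*al + (p+d)*be*r) - r*((q+d)*al*rc - r*rc*be - rc*al*q + (p+d)*be*q)) / (d*t)^2"
    using d t by (simp add: field_simps power2_eq_square)
  also have "\<dots> = al * (d*t)^2 / (d*t)^2"
    apply (rule arg_cong[where f="\<lambda>z. z / _"])
    using R T by algebra
  also have "\<dots> = al" using d t by simp
  finally show ?thesis .
qed

lemma scal_id2:
  fixes p q d t r rc al be :: complex
  assumes R: "r*rc = p*q - d^2" and T: "t^2 = p+q+2*d" and d: "d \<noteq> 0" and t: "t \<noteq> 0"
  shows "(-rc/(d*t)) * (((q+d)/(d*t)*al + (-r/(d*t))*be)*p + ((-rc/(d*t))*al + (p+d)/(d*t)*be)*r)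
       + (p+d)/(d*t) * (((q+d)/(d*t)*al + (-r/(d*t))*be)*rc + ((-rc/(d*t))*al + (p+d)/(d*t)*be)*q) = be"
proof -
  have "(-rc/(d*t)) * (((q+d)/(d*t)*al + (-r/(d*t))*be)*p + ((-rc/(d*t))*al + (p+d)/(d*t)*be)*r)
       + (p+d)/(d*t) * (((q+d)/(d*t)*al + (-r/(d*t))*be)*rc + ((-rc/(d*t))*al + (p+d)/(d*t)*be)*q)
     = ((-rc)*((q+d)*al*p - r*be*p - r*rc*al + (p+d)*be*r) + (p+d)*((q+d)*al*rc - r*rc*be - rc*al*q + (p+d)*be*q)) / (d*t)^2"
    using d t by (simp add: field_simps power2_eq_square)
  also have "\<dots> = be * (d*t)^2 / (d*t)^2"
    apply (rule arg_cong[where f="\<lambda>z. z / _"])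
    using R T by algebra
  also have "\<dots> = be" using d t by simp
  finally show ?thesis .
qed

lemma scal_id3:
  fixes p q d t r rc :: complex
  assumes R: "r*rc = p*q - d^2" and T: "t^2 = p+q+2*d" and d: "d \<noteq> 0" and t: "t \<noteq> 0"
  shows "(q+d)/(d*t) * p + (-rc/(d*t)) * r + (-r/(d*t)) * rc + (p+d)/(d*t) * q = t"
proof -
  have "(q+d)/(d*t) * p + (-rc/(d*t)) * r + (-r/(d*t)) * rc + (p+d)/(d*t) * q
      = ((q+d)*p - 2*(r*rc) + (p+d)*q) / (d*t)" using d t by (simp add: field_simps)
  also have "\<dots> = (d * t^2) / (d*t)"
    apply (rule arg_cong[where f="\<lambda>z. z / _"]) using R T by algebra
  also have "\<dots> = t" using d t by (simp add: power2_eq_square)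
  finally show ?thesis .
qed

lemma scal_id4:
  fixes x y d t r rc al alc be bec :: complex
  assumes d: "d \<noteq> 0" and t: "t \<noteq> 0"
  shows "(x*(d*t)) * (((x/(d*t))*al + (-r/(d*t))*be)*alc + ((-rc/(d*t))*al + (y/(d*t))*be)*bec)
     = (x*al - r*be)*(x*alc - rc*bec) + (x*y - r*rc)*(be*bec)"
  using d t by (simp add: field_simps)

definition Qm :: "complex^'n \<Rightarrow> complex^'n \<Rightarrow> complex \<Rightarrow> complex \<Rightarrow> complex \<Rightarrow> complex \<Rightarrow> complex^'n^'n" where
  "Qm a b k11 k12 k21 k22 = outer (k11 *s a + k21 *s b) a + outer (k12 *s a + k22 *s b) b"

lemma Qm_vec: "Qm a b k11 k12 k21 k22 *v x =
   (k11 * cinner a x + k12 * cinner b x) *s a + (k21 * cinner a x + k22 * cinner b x) *s b"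
  by (simp add: Qm_def cinner_mat_vec_add outer_mult_vec vec_eq_iff algebra_simps)

lemma trace_Qm: "trace (Qm a b k11 k12 k21 k22) =
   k11 * cinner a a + k21 * cinner a b + k12 * cinner b a + k22 * cinner b b"
  by (simp add: Qm_def trace_add trace_outer cinner_add_right cinner_scale_right)

lemma adjoint_Qm: "adjoint_mat (Qm a b k11 k12 k21 k22) = Qm a b (cnj k11) (cnj k21) (cnj k12) (cnj k22)"
  by (simp add: Qm_def adjoint_mat_def outer_def vec_eq_iff algebra_simps)

lemma quad_Qm: "cinner x (Qm a b k11 k12 k21 k22 *v x) =
   (k11 * cinner a x + k12 * cinner b x) * cnj (cinner a x) + (k21 * cinner a x + k22 * cinner b x) * cnj (cinner b x)"
  by (simp add: Qm_vec cinner_add_right cinner_scale_right cinner_commute[of x] algebra_simps)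

lemma outer2_vec: "(outer a a + outer b b) *v x = cinner a x *s a + cinner b x *s b"
  by (simp add: cinner_mat_vec_add outer_mult_vec)

lemma cinner_self_ge0: "0 \<le> Re (cinner a a)" by (simp add: cinner_self_Re)
lemma cinner_self_ofreal: "cinner a a = of_real (Re (cinner a a))" by (simp add: cinner_self_real cinner_self_Re)

lemma mult_cnj_ofreal: "z * cnj z = of_real ((cmod z)^2)"
  by (metis complex_norm_square)

lemma fid2_nondeg:
  fixes a b :: "complex^'n"
  defines "p \<equiv> Re (cinner a a)" and "q \<equiv> Re (cinner b b)" and "r \<equiv> cinner a b"
  assumes D: "p*q - (cmod r)^2 > 0"
  shows "Re (trace (msqrt (outer a a + outer b b))) = sqrt (p + q + 2 * sqrt (p*q - (cmod r)^2))"
proof -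
  define d where "d = sqrt (p*q - (cmod r)^2)"
  define t where "t = sqrt (p + q + 2*d)"
  have p0: "p \<ge> 0" and q0: "q \<ge> 0" by (simp_all add: p_def q_def cinner_self_ge0)
  have d0: "d > 0" using D by (simp add: d_def)
  have t0: "t > 0" using d0 p0 q0 by (simp add: t_def)
  define P where "P = complex_of_real p"
  define Q where "Q = complex_of_real q"
  define Dc where "Dc = complex_of_real d"
  define T where "T = complex_of_real t"
  have aa: "cinner a a = P" by (simp add: P_def p_def cinner_self_ofreal[symmetric])
  have bb: "cinner b b = Q" by (simp add: Q_def q_def cinner_self_ofreal[symmetric])
  have ba: "cinner b a = cnj r" by (simp add: r_def cinner_commute[of b a])
  have R: "r * cnj r = P*Q - Dc^2"
  proof -
    have "d^2 = p*q - (cmod r)^2" using D by (simp add: d_def)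
    then have "(cmod r)^2 = p*q - d^2" by simp
    have "r * cnj r = of_real ((cmod r)^2)" by (rule mult_cnj_ofreal)
    also have "\<dots> = of_real (p*q - d^2)" using \<open>(cmod r)^2 = p*q - d^2\<close> by simp
    also have "\<dots> = P*Q - Dc^2" by (simp add: P_def Q_def Dc_def)
    finally show ?thesis .
  qed
  have Tr: "T^2 = P + Q + 2*Dc"
  proof -
    have "t^2 = p + q + 2*d" using p0 q0 d0 by (simp add: t_def)
    then have "complex_of_real (t^2) = of_real (p + q + 2*d)" by simp
    then show ?thesis by (simp add: P_def Q_def Dc_def T_def)
  qed
  have Dn: "Dc \<noteq> 0" and Tn: "T \<noteq> 0" using d0 t0 by (simp_all add: Dc_def T_def)
  define k11 where "k11 = (Q+Dc)/(Dc*T)"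
  define k12 where "k12 = -r/(Dc*T)"
  define k21 where "k21 = -cnj r/(Dc*T)"
  define k22 where "k22 = (P+Dc)/(Dc*T)"
  define S where "S = Qm a b k11 k12 k21 k22"
  have SS: "S ** S = outer a a + outer b b"
  proof (rule mat_eqI)
    fix x
    define al where "al = cinner a x"
    define be where "be = cinner b x"
    define c1 where "c1 = k11 * al + k12 * be"
    define c2 where "c2 = k21 * al + k22 * be"
    have Sx: "S *v x = c1 *s a + c2 *s b" by (simp add: S_def Qm_vec c1_def c2_def al_def be_def)
    have "S *v (c1 *s a + c2 *s b) =
       (k11 * (c1*P + c2*r) + k12 * (c1*cnj r + c2*Q)) *s a + (k21 * (c1*P + c2*r) + k22 * (c1*cnj r + c2*Q)) *s b"
      by (simp add: S_def Qm_vec cinner_add_right cinner_scale_right aa bb ba r_def[symmetric] algebra_simps)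
    also have "k11 * (c1*P + c2*r) + k12 * (c1*cnj r + c2*Q) = al"
      unfolding k11_def k12_def c1_def c2_def k21_def k22_def by (rule scal_id1[OF R Tr Dn Tn])
    also have "k21 * (c1*P + c2*r) + k22 * (c1*cnj r + c2*Q) = be"
      unfolding k11_def k12_def c1_def c2_def k21_def k22_def by (rule scal_id2[OF R Tr Dn Tn])
    finally show "(S ** S) *v x = (outer a a + outer b b) *v x"
      by (simp add: matrix_vector_mul_assoc[symmetric] Sx outer2_vec al_def be_def)
  qed
  have hS: "adjoint_mat S = S"
    by (simp add: S_def adjoint_Qm k11_def k12_def k21_def k22_def P_def Q_def Dc_def T_def)
  have qS: "0 \<le> Re (cinner x (S *v x))" for x
  proof -
    define al where "al = cinner a x"
    define be where "be = cinner b x"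
    have "(Q+Dc) * (Dc*T) * cinner x (S *v x) =
       ((Q+Dc)*al - r*be)*((Q+Dc)*cnj al - cnj r*cnj be) + ((Q+Dc)*(P+Dc) - r*cnj r)*(be*cnj be)"
      unfolding S_def quad_Qm k11_def k12_def k21_def k22_def al_def[symmetric] be_def[symmetric]
      by (rule scal_id4[OF Dn Tn])
    also have "\<dots> = ((Q+Dc)*al - r*be) * cnj ((Q+Dc)*al - r*be) + of_real ((q+d)*(p+d) - (cmod r)^2) * (be*cnj be)"
      by (simp add: P_def Q_def Dc_def mult_cnj_ofreal)
    finally have eq: "of_real ((q+d)*(d*t)) * cinner x (S *v x) =
       ((Q+Dc)*al - r*be) * cnj ((Q+Dc)*al - r*be) + of_real ((q+d)*(p+d) - (cmod r)^2) * (be*cnj be)"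
      by (simp add: P_def Q_def Dc_def T_def)
    have nn: "0 \<le> (q+d)*(p+d) - (cmod r)^2"
    proof -
      have "(cmod r)^2 = p*q - d^2" using D by (simp add: d_def)
      moreover have "0 \<le> d*p" "0 \<le> d*q" "0 \<le> d*d" using p0 q0 d0 by simp_all
      moreover have "(q+d)*(p+d) = p*q + d*p + d*q + d*d" by (simp add: algebra_simps)
      moreover have "d^2 = d*d" by (simp add: power2_eq_square)
      ultimately show ?thesis by linarith
    qed
    have e1: "0 \<le> Re (((Q+Dc)*al - r*be) * cnj ((Q+Dc)*al - r*be))" by (rule mult_self_cnj_Re)
    have e2: "0 \<le> Re (of_real ((q+d)*(p+d) - (cmod r)^2) * (be*cnj be))"
      unfolding mult_cnj_ofreal of_real_mult[symmetric] Re_complex_of_real using nn by simp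
    have "0 \<le> Re (of_real ((q+d)*(d*t)) * cinner x (S *v x))"
      unfolding eq using e1 e2 by (simp only: plus_complex.sel)
    then have "0 \<le> ((q+d)*(d*t)) * Re (cinner x (S *v x))" by simp
    moreover have "(q+d)*(d*t) > 0" using q0 d0 t0 by simp
    ultimately show ?thesis by (simp add: zero_le_mult_iff)
  qed
  have pS: "psd S" using hS qS by (simp add: psd_def)
  have ms: "msqrt (outer a a + outer b b) = S"
    by (rule msqrt_unique[OF psd_add[OF psd_outer psd_outer] pS SS])
  have "trace S = T"
    unfolding S_def trace_Qm aa bb ba r_def[symmetric] k11_def k12_def k21_def k22_def
    by (rule scal_id3[OF R Tr Dn Tn])
  then show ?thesis by (simp add: ms T_def t_def d_def)
qed

lemma proj_resid:
  fixes a b :: "complex^'n"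
  assumes p: "Re (cinner a a) > 0"
  shows "cinner (b - (cinner a b / cinner a a) *s a) (b - (cinner a b / cinner a a) *s a)
     = of_real (Re (cinner b b) - (cmod (cinner a b))^2 / Re (cinner a a))"
proof -
  define P where "P = Re (cinner a a)"
  define r where "r = cinner a b"
  have aa: "cinner a a = of_real P" by (simp add: P_def cinner_self_ofreal[symmetric])
  have bb: "cinner b b = of_real (Re (cinner b b))" by (rule cinner_self_ofreal)
  have ba: "cinner b a = cnj r" by (simp add: r_def cinner_commute[of b a])
  have P0: "P \<noteq> 0" using p by (simp add: P_def)
  have "cinner (b - (r / of_real P) *s a) (b - (r / of_real P) *s a)
     = cinner b b - (r / of_real P) * cinner b a - cnj (r / of_real P) * cinner a b
       + cnj (r / of_real P) * (r / of_real P) * cinner a a"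
    by (simp add: cinner_diff_left cinner_diff_right cinner_scale_left cinner_scale_right algebra_simps)
  also have "\<dots> = cinner b b - r * cnj r / of_real P"
    using P0 by (simp add: ba aa r_def[symmetric] field_simps)
  also have "\<dots> = of_real (Re (cinner b b) - (cmod r)^2 / P)"
    by (subst bb) (simp add: mult_cnj_ofreal)
  finally have ch: "cinner (b - (r / of_real P) *s a) (b - (r / of_real P) *s a) = of_real (Re (cinner b b) - (cmod r)^2 / P)" .
  have "cinner a b / cinner a a = r / of_real P" by (simp add: aa r_def)
  then show ?thesis unfolding \<open>cinner a b / cinner a a = r / of_real P\<close> using ch by (simp only: P_def r_def)
qed

lemma cauchy_schwarz:
  fixes a b :: "complex^'n"
  shows "(cmod (cinner a b))^2 \<le> Re (cinner a a) * Re (cinner b b)"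
proof (cases "a = 0")
  case True then show ?thesis by simp
next
  case False
  then have p: "Re (cinner a a) > 0" by (simp add: cinner_self_Re)
  have "0 \<le> Re (cinner (b - (cinner a b / cinner a a) *s a) (b - (cinner a b / cinner a a) *s a))"
    by (rule cinner_self_ge0)
  then have "0 \<le> Re (cinner b b) - (cmod (cinner a b))^2 / Re (cinner a a)"
    by (simp only: proj_resid[OF p] Re_complex_of_real)
  then show ?thesis using p by (simp add: field_simps mult.commute)
qed

lemma outer_scaleR_both: "outer (c *\<^sub>R a) (c *\<^sub>R a) = (c^2) *\<^sub>R outer a a"
  by (simp add: outer_def vec_eq_iff scaleR_nth scaleR_nth2 power2_eq_square del: vector_scaleR_component)

lemma outer_smult_both: "outer (c *s a) (c *s a) = ((cmod c)^2) *\<^sub>R outer a a"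
proof -
  have e: "(complex_of_real (cmod c))^2 = c * cnj c" by (metis complex_norm_square of_real_power)
  show ?thesis
    by (simp add: outer_def vec_eq_iff scaleR_nth2 e algebra_simps del: vector_scaleR_component)
qed

lemma fid2:
  fixes a b :: "complex^'n"
  shows "Re (trace (msqrt (outer a a + outer b b))) =
     sqrt (Re (cinner a a) + Re (cinner b b) + 2 * sqrt (Re (cinner a a) * Re (cinner b b) - (cmod (cinner a b))^2))"
proof -
  define p where "p = Re (cinner a a)"
  define q where "q = Re (cinner b b)"
  define r where "r = cinner a b"
  have CS: "(cmod r)^2 \<le> p*q" unfolding p_def q_def r_def by (rule cauchy_schwarz)
  have p0: "p \<ge> 0" and q0: "q \<ge> 0" by (simp_all add: p_def q_def cinner_self_ge0)
  show ?thesis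
  proof (cases "p*q - (cmod r)^2 > 0")
    case True
    then show ?thesis using fid2_nondeg[of a b] by (simp add: p_def q_def r_def)
  next
    case False
    then have D: "(cmod r)^2 = p*q" using CS by simp
    show ?thesis
    proof (cases "p = 0")
      case True
      then have "a = 0" by (simp add: p_def cinner_self_Re)
      have "outer (0::complex^'n) 0 = 0" by (simp add: outer_def vec_eq_iff)
      then show ?thesis using trace_msqrt_outer[of b] \<open>a = 0\<close>
        by (simp add: norm_cinner)
    next
      case False
      then have pp: "p > 0" using p0 by simp
      define c where "c = r / cinner a a"
      have "cinner (b - c *s a) (b - c *s a) = 0"
        using proj_resid[of a b] pp D unfolding c_def r_def p_def q_def by simp
      then have bc: "b = c *s a" by (simp add: cinner_self_eq0)
      have cc: "(cmod c)^2 = q / p"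
      proof -
        have "cinner a a = of_real p" by (simp add: p_def cinner_self_ofreal[symmetric])
        then have "cmod c = cmod r / p" using pp by (simp add: c_def norm_divide)
        then show ?thesis using D pp by (simp add: power_divide power2_eq_square)
      qed
      define w where "w = sqrt (1 + q/p) *\<^sub>R a"
      have "outer w w = (1 + q/p) *\<^sub>R outer a a"
        using pp q0 by (simp add: w_def outer_scaleR_both)
      also have "\<dots> = outer a a + (q/p) *\<^sub>R outer a a" by (simp add: scaleR_add_left)
      also have "\<dots> = outer a a + outer b b" by (simp add: bc outer_smult_both cc)
      finally have "outer a a + outer b b = outer w w" by simp
      moreover have "norm w = sqrt (p + q)"
      proof -
        have "norm a = sqrt p" by (simp add: norm_cinner p_def)
        then have "norm w = sqrt (1 + q/p) * sqrt p" using pp q0 by (simp add: w_def)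
        also have "\<dots> = sqrt ((1 + q/p) * p)" by (simp add: real_sqrt_mult)
        also have "(1 + q/p) * p = p + q" using pp by (simp add: field_simps)
        finally show ?thesis .
      qed
      ultimately show ?thesis using D trace_msqrt_outer[of w]
        by (simp add: p_def[symmetric] q_def[symmetric] r_def[symmetric])
    qed
  qed
qed

lemma mat_outer_left: "(M::complex^'n^'n) ** outer u v = outer (M *v u) v"
  by (simp add: outer_def matrix_matrix_mult_def matrix_vector_mult_def vec_eq_iff sum_distrib_right mult.assoc)

lemma mat_outer_right: "outer u v ** (M::complex^'n^'n) = outer u (adjoint_mat M *v v)"
  by (simp add: outer_def matrix_matrix_mult_def matrix_vector_mult_def adjoint_mat_def vec_eq_iff
      sum_distrib_left cnj_sum algebra_simps)

lemma matrix_add_rdistrib': "((B + C) ** (A::complex^'n^'n)) = B ** A + C ** A"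
  by (simp add: matrix_matrix_mult_def vec_eq_iff distrib_right sum.distrib)

lemma infid_nonpsd: fixes \<rho> \<sigma> :: "complex^'n^'n" shows "\<not> psd \<rho> \<Longrightarrow> infidelity \<rho> \<sigma> = 1"
proof -
  assume "\<not> psd \<rho>"
  then have "msqrt \<rho> = 0" by (simp add: msqrt_def)
  moreover have "(0::complex^'n^'n) ** \<sigma> ** 0 = 0" by (simp add: matrix_matrix_mult_def vec_eq_iff)
  ultimately show ?thesis by (simp add: infidelity_def msqrt_zero trace_def)
qed

lemma infid_formula:
  fixes \<rho> :: "complex^'n^'n"
  assumes p: "psd \<rho>"
  shows "infidelity \<rho> (outer u u + outer v v) =
    1 - sqrt (Re (cinner u (\<rho> *v u)) + Re (cinner v (\<rho> *v v)) +
      2 * sqrt (Re (cinner u (\<rho> *v u)) * Re (cinner v (\<rho> *v v)) - (cmod (cinner u (\<rho> *v v)))^2))"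
proof -
  define R where "R = msqrt \<rho>"
  have pR: "psd R" and RR: "R ** R = \<rho>" using msqrt_props[OF p] by (simp_all add: R_def)
  have hR: "adjoint_mat R = R" using pR by (simp add: psd_def)
  have e: "R ** (outer u u + outer v v) ** R = outer (R *v u) (R *v u) + outer (R *v v) (R *v v)"
    by (simp add: matrix_add_ldistrib matrix_add_rdistrib' mat_outer_left mat_outer_right hR)
  have c: "cinner (R *v x) (R *v y) = cinner x (\<rho> *v y)" for x y
    by (simp add: herm_cinner[OF hR, symmetric] matrix_vector_mul_assoc RR)
  show ?thesis unfolding infidelity_def R_def[symmetric] e fid2 c ..
qed

lemma cinner_axis: "cinner (axis k 1) y = y $ k"
proof -
  have "cinner (axis k 1) y = (\<Sum>i\<in>UNIV. if i = k then y $ i else 0)"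
    unfolding cinner_def by (rule sum.cong) (auto simp: axis_def)
  then show ?thesis by simp
qed

lemma mat_axis: "((A::complex^'n^'n) *v axis k 1) $ i = A $ i $ k"
proof -
  have "(A *v axis k 1) $ i = (\<Sum>j\<in>UNIV. if j = k then A $ i $ j else 0)"
    unfolding matrix_vector_mult_def vec_lambda_beta by (rule sum.cong) (auto simp: axis_def)
  then show ?thesis by simp
qed

lemma axis_quad: "cinner (axis k 1) ((A::complex^'n^'n) *v axis k 1) = A $ k $ k"
  by (simp add: cinner_axis mat_axis)

lemma psd_diag: assumes "psd A" shows "A $ k $ k = of_real (Re (A $ k $ k))" "0 \<le> Re (A $ k $ k)"
proof -
  have h: "adjoint_mat A = A" using assms by (simp add: psd_def)
  show "A $ k $ k = of_real (Re (A $ k $ k))"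
    unfolding axis_quad[symmetric] by (rule herm_real[OF h])
  show "0 \<le> Re (A $ k $ k)" using psd_quad[OF assms, of "axis k 1"] unfolding axis_quad .
qed

lemma pure_outer:
  fixes \<sigma> :: "complex^'n^'n"
  assumes ps: "pure_state \<sigma>"
  shows "\<exists>\<psi>. \<sigma> = outer \<psi> \<psi> \<and> cinner \<psi> \<psi> = 1"
proof -
  have dm: "psd \<sigma>" "trace \<sigma> = 1" and rk: "vec.dim (rows \<sigma>) = 1"
    using ps by (auto simp: pure_state_def density_matrix_def row_rank_def_gen)
  have h: "adjoint_mat \<sigma> = \<sigma>" using dm by (simp add: psd_def)
  obtain B where B: "B \<subseteq> rows \<sigma>" "rows \<sigma> \<subseteq> vec.span B" "card B = 1"
    using vec.basis_exists[of "rows \<sigma>"] rk by metis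
  then obtain r0 where "B = {r0}" by (auto simp: card_Suc_eq)
  then have "\<forall>i. \<exists>c. \<sigma> $ i = c *s r0" using B(2) vec.span_singleton[of r0]
    by (auto simp: rows_def row_def)
  then obtain c where c: "\<And>i. \<sigma> $ i = c i *s r0" by metis
  have sij: "\<sigma> $ i $ j = c i * r0 $ j" for i j by (simp add: c)
  have "\<exists>k. \<sigma> $ k $ k \<noteq> 0"
  proof (rule ccontr)
    assume "\<not> ?thesis"
    then have "trace \<sigma> = 0" by (simp add: trace_def)
    then show False using dm by simp
  qed
  then obtain k where k: "\<sigma> $ k $ k \<noteq> 0" by blast
  define s where "s = Re (\<sigma> $ k $ k)"
  have skk: "\<sigma> $ k $ k = of_real s" using psd_diag(1)[OF dm(1), of k] unfolding s_def .
  have "s \<ge> 0" using psd_diag(2)[OF dm(1), of k] unfolding s_def .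
  moreover have "s \<noteq> 0" using k skk by auto
  ultimately have s0: "s > 0" by simp
  define \<psi> where "\<psi> = (\<chi> i. \<sigma> $ i $ k / of_real (sqrt s))"
  have hc: "cnj (\<sigma> $ j $ k) = \<sigma> $ k $ j" for j
    using h by (auto simp: adjoint_mat_def vec_eq_iff)
  have "outer \<psi> \<psi> = \<sigma>"
  proof -
    have e1: "\<sigma> $ i $ k * \<sigma> $ k $ j = \<sigma> $ i $ j * \<sigma> $ k $ k" for i j
      by (simp add: sij algebra_simps)
    have sq: "complex_of_real (sqrt s) * complex_of_real (sqrt s) = complex_of_real s"
      using s0 by (simp flip: of_real_mult)
    have "outer \<psi> \<psi> $ i $ j = \<sigma> $ i $ j" for i j
    proof -
      have "outer \<psi> \<psi> $ i $ j = (\<sigma> $ i $ k * cnj (\<sigma> $ j $ k)) / (complex_of_real (sqrt s) * complex_of_real (sqrt s))"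
        by (simp add: outer_def \<psi>_def)
      also have "\<dots> = (\<sigma> $ i $ j * \<sigma> $ k $ k) / complex_of_real s" by (simp only: hc e1 sq)
      also have "\<dots> = \<sigma> $ i $ j" using s0 by (simp add: skk)
      finally show ?thesis .
    qed
    then show ?thesis by (simp add: vec_eq_iff)
  qed
  moreover have "cinner \<psi> \<psi> = 1"
    using trace_outer[of \<psi> \<psi>] \<open>outer \<psi> \<psi> = \<sigma>\<close> dm by simp
  ultimately show ?thesis by metis
qed

lemma rank_outer:
  fixes w :: "complex^'n"
  assumes w: "w \<noteq> 0"
  shows "rank (outer w w) = 1"
proof -
  define cw where "cw = (\<chi> j. cnj (w $ j))"
  obtain k where k: "w $ k \<noteq> 0" using w by (metis vec_eq_iff zero_index)
  have cw0: "cw \<noteq> 0" using k by (auto simp: cw_def vec_eq_iff)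
  have rowi: "row i (outer w w) = w $ i *s cw" for i
    by (simp add: row_def outer_def cw_def vec_eq_iff)
  have "rows (outer w w) \<subseteq> vec.span {cw}"
    by (auto simp: rows_def rowi vec.span_singleton)
  moreover have "cw \<in> vec.span (rows (outer w w))"
  proof -
    have "cw = (1 / w $ k) *s row k (outer w w)" using k by (simp add: rowi vec_eq_iff)
    moreover have "row k (outer w w) \<in> rows (outer w w)" by (auto simp: rows_def)
    ultimately show ?thesis by (metis vec.span_base vec.span_scale)
  qed
  ultimately have "vec.span (rows (outer w w)) = vec.span {cw}"
  proof -
    assume S1: "rows (outer w w) \<subseteq> vec.span {cw}" and S2: "cw \<in> vec.span (rows (outer w w))"
    have "vec.span (rows (outer w w)) \<subseteq> vec.span (vec.span {cw})" by (rule vec.span_mono[OF S1])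
    moreover have "vec.span {cw} \<subseteq> vec.span (vec.span (rows (outer w w)))"
      by (rule vec.span_mono) (use S2 in auto)
    ultimately show ?thesis by (simp add: vec.span_span)
  qed
  then have "vec.dim (rows (outer w w)) = vec.dim {cw}" by (metis vec.dim_span)
  then show ?thesis using cw0 by (simp add: row_rank_def_gen vec.dim_singleton)
qed

lemma adjoint_diff: "adjoint_mat (A - B) = adjoint_mat A - adjoint_mat B"
  by (simp add: adjoint_mat_def vec_eq_iff)

lemma psd_cs:
  fixes \<rho> :: "complex^'n^'n"
  assumes p: "psd \<rho>"
  shows "(cmod (cinner x (\<rho> *v y)))^2 \<le> Re (cinner x (\<rho> *v x)) * Re (cinner y (\<rho> *v y))"
proof -
  define R where "R = msqrt \<rho>"
  have pR: "psd R" and RR: "R ** R = \<rho>" using msqrt_props[OF p] by (simp_all add: R_def)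
  have hR: "adjoint_mat R = R" using pR by (simp add: psd_def)
  have c: "cinner (R *v x) (R *v y) = cinner x (\<rho> *v y)" for x y
    by (simp add: herm_cinner[OF hR, symmetric] matrix_vector_mul_assoc RR)
  show ?thesis using cauchy_schwarz[of "R *v x" "R *v y"] by (simp add: c)
qed

lemma schur_psd:
  fixes \<rho> :: "complex^'n^'n"
  assumes p: "psd \<rho>" and p0: "Re (cinner x0 (\<rho> *v x0)) > 0"
  shows "psd (\<rho> - (1 / Re (cinner x0 (\<rho> *v x0))) *\<^sub>R outer (\<rho> *v x0) (\<rho> *v x0))"
proof -
  define pp where "pp = Re (cinner x0 (\<rho> *v x0))"
  have h: "adjoint_mat \<rho> = \<rho>" using p by (simp add: psd_def)
  have adj: "adjoint_mat (\<rho> - (1/pp) *\<^sub>R outer (\<rho> *v x0) (\<rho> *v x0)) = \<rho> - (1/pp) *\<^sub>R outer (\<rho> *v x0) (\<rho> *v x0)"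
    by (simp add: adjoint_diff adjoint_scaleR adjoint_outer h)
  have q: "0 \<le> Re (cinner y ((\<rho> - (1/pp) *\<^sub>R outer (\<rho> *v x0) (\<rho> *v x0)) *v y))" for y
  proof -
    have e: "cinner (\<rho> *v x0) y = cinner x0 (\<rho> *v y)" by (simp add: herm_cinner[OF h])
    have "(cmod (cinner x0 (\<rho> *v y)))^2 \<le> pp * Re (cinner y (\<rho> *v y))"
      using psd_cs[OF p] by (simp add: pp_def)
    then have "(cmod (cinner x0 (\<rho> *v y)))^2 / pp \<le> Re (cinner y (\<rho> *v y))"
      using p0 by (simp add: pp_def divide_le_eq mult.commute)
    moreover have "Re (cinner y ((\<rho> - (1/pp) *\<^sub>R outer (\<rho> *v x0) (\<rho> *v x0)) *v y))
        = Re (cinner y (\<rho> *v y)) - (cmod (cinner x0 (\<rho> *v y)))^2 / pp"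
      by (simp add: matrix_vector_mult_diff_rdistrib cinner_diff_right scaleR_mat_vec cinner_scaleR_right
          cinner_outer_quad e mult_cnj_ofreal)
    ultimately show ?thesis by simp
  qed
  show ?thesis using adj q by (simp add: psd_def pp_def)
qed

lemma psd_zero_diag:
  fixes M :: "complex^'n^'n"
  assumes p: "psd M" and d: "\<And>i. M $ i $ i = 0"
  shows "M = 0"
proof -
  have h: "adjoint_mat M = M" using p by (simp add: psd_def)
  have hc: "M $ j $ i = cnj (M $ i $ j)" for i j using h by (auto simp: adjoint_mat_def vec_eq_iff)
  have "M $ i $ j = 0" for i j
  proof -
    define m where "m = M $ i $ j"
    define z where "z = - cnj m"
    define x where "x = axis i 1 + z *s axis j 1"
    have ea: "cinner (axis a 1) (M *v axis b 1) = M $ a $ b" for a b by (simp add: cinner_axis mat_axis)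
    have hji: "M $ j $ i = cnj m" using hc[of i j] by (simp add: m_def)
    have "cinner x (M *v x) = M $ i $ i + z * M $ i $ j + cnj z * M $ j $ i + cnj z * z * M $ j $ j"
      by (simp add: x_def mat_vec_add mat_vec_smult cinner_add_left cinner_add_right cinner_scale_left
          cinner_scale_right ea algebra_simps)
    also have "\<dots> = - 2 * (m * cnj m)" by (simp add: d hji z_def m_def[symmetric])
    finally have "cinner x (M *v x) = - 2 * of_real ((cmod m)^2)" by (simp add: mult_cnj_ofreal)
    then have "Re (cinner x (M *v x)) = - 2 * (cmod m)^2" by simp
    moreover have "0 \<le> Re (cinner x (M *v x))" by (rule psd_quad[OF p])
    ultimately have "cmod m = 0" by simp
    then show ?thesis by (simp add: m_def)
  qed
  then show ?thesis by (simp add: vec_eq_iff)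
qed

lemma psd_trace_le0:
  fixes M :: "complex^'n^'n"
  assumes p: "psd M" and t: "Re (trace M) \<le> 0"
  shows "M = 0"
proof -
  have nn: "0 \<le> Re (M $ i $ i)" for i by (rule psd_diag(2)[OF p])
  have "Re (trace M) = (\<Sum>i\<in>UNIV. Re (M $ i $ i))" by (simp add: trace_def)
  moreover have "0 \<le> (\<Sum>i\<in>UNIV. Re (M $ i $ i))" by (rule sum_nonneg) (use nn in auto)
  ultimately have "(\<Sum>i\<in>UNIV. Re (M $ i $ i)) = 0" using t by linarith
  then have "Re (M $ i $ i) = 0" for i using nn by (simp add: sum_nonneg_eq_0_iff)
  then have "M $ i $ i = 0" for i using psd_diag(1)[OF p, of i] by (metis of_real_0)
  then show ?thesis by (rule psd_zero_diag[OF p])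
qed

lemma mixed_unit_lt1:
  fixes \<rho>0 :: "complex^'n^'n"
  assumes m: "mixed_state \<rho>0" and nx: "norm x0 = 1"
  shows "Re (cinner x0 (\<rho>0 *v x0)) < 1"
proof (rule ccontr)
  assume "\<not> ?thesis"
  then have pp1: "Re (cinner x0 (\<rho>0 *v x0)) \<ge> 1" by simp
  define pp where "pp = Re (cinner x0 (\<rho>0 *v x0))"
  have pp0: "pp > 0" using pp1 by (simp add: pp_def)
  have p: "psd \<rho>0" and tr: "trace \<rho>0 = 1" and rk: "rank \<rho>0 \<noteq> 1"
    using m by (auto simp: mixed_state_def density_matrix_def)
  have h: "adjoint_mat \<rho>0 = \<rho>0" using p by (simp add: psd_def)
  define w where "w = \<rho>0 *v x0"
  define M where "M = \<rho>0 - (1/pp) *\<^sub>R outer w w"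
  have pM: "psd M" unfolding M_def w_def pp_def by (rule schur_psd[OF p]) (use pp0 in \<open>simp add: pp_def\<close>)
  have xw: "cinner x0 w = of_real pp" unfolding w_def pp_def by (rule herm_real[OF h])
  have "(cmod (cinner x0 w))^2 \<le> Re (cinner x0 x0) * Re (cinner w w)" by (rule cauchy_schwarz)
  then have ww: "pp^2 \<le> Re (cinner w w)" using nx by (simp add: xw cinner_self_Re)
  have "Re (trace M) = 1 - Re (cinner w w) / pp"
    by (simp add: M_def trace_sub trace_scaleR trace_outer tr)
  also have "\<dots> \<le> 1 - pp"
  proof -
    have "pp * pp \<le> Re (cinner w w)" using ww by (simp add: power2_eq_square)
    then have "pp \<le> Re (cinner w w) / pp" using pp0 by (simp add: le_divide_eq)
    then show ?thesis by simp
  qed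
  also have "\<dots> \<le> 0" using pp1 by (simp add: pp_def)
  finally have "M = 0" by (rule psd_trace_le0[OF pM])
  then have r: "\<rho>0 = (1/pp) *\<^sub>R outer w w" by (simp add: M_def)
  define w' where "w' = (1 / sqrt pp) *\<^sub>R w"
  have "outer w' w' = (1/pp) *\<^sub>R outer w w"
    using pp0 by (simp add: w'_def outer_scaleR_both power_divide)
  then have "\<rho>0 = outer w' w'" using r by simp
  moreover have "w' \<noteq> 0"
  proof -
    have "Re (cinner w w) > 0" using ww pp0 by (smt (verit) zero_less_power)
    then have "w \<noteq> 0" by auto
    then show ?thesis using pp0 by (simp add: w'_def)
  qed
  ultimately have "rank \<rho>0 = 1" using rank_outer by simp
  with rk show False by simp
qed

lemma norm_axis1: "norm (axis k (1::complex) :: complex^'n) = 1"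
  by (simp add: norm_cinner cinner_axis)

lemma mixed_bound:
  fixes \<rho>0 :: "complex^'n^'n"
  assumes m: "mixed_state \<rho>0"
  shows "\<exists>L<1. \<forall>x. Re (cinner x (\<rho>0 *v x)) \<le> L * (norm x)^2"
proof -
  define q where "q = (\<lambda>x::complex^'n. Re (cinner x (\<rho>0 *v x)))"
  have ne: "sphere (0::complex^'n) 1 \<noteq> {}"
    using norm_axis1[of undefined] by (auto simp: sphere_def intro!: exI[of _ "axis undefined 1"])
  obtain x0 where x0: "x0 \<in> sphere 0 1" and mx: "\<forall>y\<in>sphere 0 1. q y \<le> q x0"
    using continuous_attains_sup[OF compact_sphere ne, of q] cont_quad unfolding q_def by blast
  have L1: "q x0 < 1" using mixed_unit_lt1[OF m] x0 by (simp add: q_def)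
  have "q x \<le> q x0 * (norm x)^2" for x
  proof (cases "x = 0")
    case True then show ?thesis by (simp add: q_def)
  next
    case False
    then have n: "norm x > 0" by simp
    define y where "y = (1 / norm x) *\<^sub>R x"
    have "y \<in> sphere 0 1" using n by (simp add: y_def)
    then have "q y \<le> q x0" using mx by blast
    moreover have "q y = q x / (norm x)^2"
      by (simp add: q_def y_def mat_vec_scaleR cinner_scaleR_left cinner_scaleR_right power2_eq_square)
    ultimately show ?thesis using n by (simp add: divide_le_eq)
  qed
  then show ?thesis using L1 unfolding q_def by blast
qed

lemma psd_trace_ge0: "psd M \<Longrightarrow> 0 \<le> Re (trace M)"
  by (simp add: trace_def sum_nonneg psd_diag(2))

lemma herm_R:
  fixes \<rho> :: "complex^'n^'n"
  assumes p: "psd \<rho>"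
  shows "cinner (msqrt \<rho> *v x) (msqrt \<rho> *v y) = cinner x (\<rho> *v y)"
proof -
  have pR: "psd (msqrt \<rho>)" and RR: "msqrt \<rho> ** msqrt \<rho> = \<rho>" using msqrt_props[OF p] by simp_all
  have hR: "adjoint_mat (msqrt \<rho>) = msqrt \<rho>" using pR by (simp add: psd_def)
  show ?thesis by (simp add: herm_cinner[OF hR, symmetric] matrix_vector_mul_assoc RR)
qed

lemma unit_quad_le1:
  fixes \<rho> :: "complex^'n^'n"
  assumes d: "density_matrix \<rho>" and x: "cinner x x = 1"
  shows "Re (cinner x (\<rho> *v x)) \<le> 1"
proof (cases "Re (cinner x (\<rho> *v x)) > 0")
  case False then show ?thesis by simp
next
  case True
  define pp where "pp = Re (cinner x (\<rho> *v x))"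
  have p: "psd \<rho>" and tr: "trace \<rho> = 1" using d by (auto simp: density_matrix_def)
  have h: "adjoint_mat \<rho> = \<rho>" using p by (simp add: psd_def)
  have pp0: "pp > 0" using True by (simp add: pp_def)
  have "0 \<le> Re (trace (\<rho> - (1/pp) *\<^sub>R outer (\<rho> *v x) (\<rho> *v x)))"
    unfolding pp_def by (rule psd_trace_ge0[OF schur_psd[OF p True]])
  then have "Re (cinner (\<rho> *v x) (\<rho> *v x)) / pp \<le> 1"
    by (simp add: trace_sub trace_scaleR trace_outer tr)
  then have w: "Re (cinner (\<rho> *v x) (\<rho> *v x)) \<le> pp" using pp0 by (simp add: divide_le_eq)
  have "(cmod (cinner x (\<rho> *v x)))^2 \<le> Re (cinner x x) * Re (cinner (\<rho> *v x) (\<rho> *v x))"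
    by (rule cauchy_schwarz)
  moreover have "cinner x (\<rho> *v x) = of_real pp" unfolding pp_def by (rule herm_real[OF h])
  ultimately have "pp^2 \<le> pp" using w x by simp
  then show ?thesis using pp0 by (simp add: pp_def[symmetric] power2_eq_square)
qed

lemma rho_psi_bound:
  fixes \<rho> :: "complex^'n^'n"
  assumes p: "psd \<rho>" and L: "\<forall>x. Re (cinner x (\<rho> *v x)) \<le> L * (norm x)^2"
  shows "Re (cinner (\<rho> *v \<psi>) (\<rho> *v \<psi>)) \<le> L * Re (cinner \<psi> (\<rho> *v \<psi>))"
proof -
  define R where "R = msqrt \<rho>"
  have RR: "R ** R = \<rho>" using msqrt_props[OF p] by (simp add: R_def)
  define a where "a = R *v \<psi>"
  have "\<rho> *v \<psi> = R *v a" by (simp add: a_def matrix_vector_mul_assoc RR)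
  then have "cinner (\<rho> *v \<psi>) (\<rho> *v \<psi>) = cinner a (\<rho> *v a)" by (simp add: R_def herm_R[OF p])
  moreover have "cinner a a = cinner \<psi> (\<rho> *v \<psi>)" by (simp add: a_def R_def herm_R[OF p])
  moreover have "Re (cinner a (\<rho> *v a)) \<le> L * (norm a)^2" using L by blast
  ultimately show ?thesis by (simp add: cinner_self_Re[symmetric])
qed

lemma fid_lower:
  fixes p q cc e :: real
  assumes p: "0 \<le> p" and q: "0 \<le> q" and cc: "0 \<le> cc" "cc \<le> p*q" and e: "0 \<le> e" "e \<le> 1"
  shows "sqrt ((1-e)*p) + sqrt (e * (q - cc/p)) \<le>
     sqrt ((1-e)*p + e*q + 2 * sqrt (((1-e)*p)*(e*q) - (1-e)*e*cc))"
proof -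
  define s where "s = q - cc/p"
  have all: "0 \<le> s \<and> s \<le> q \<and> p * s = p*q - cc"
  proof (cases "p = 0")
    case True
    then have "cc = 0" using cc by simp
    then show ?thesis using True q by (simp add: s_def)
  next
    case False
    then have pp: "p > 0" using p by simp
    have "cc/p \<le> q" using cc pp by (simp add: divide_le_eq mult.commute)
    moreover have "s \<le> q" using cc pp by (simp add: s_def)
    moreover have "p * s = p*q - cc" using pp by (simp add: s_def algebra_simps)
    ultimately show ?thesis by (simp add: s_def)
  qed
  then have s0: "0 \<le> s" and sq: "s \<le> q" and ps: "p * s = p*q - cc" by auto
  have A0: "0 \<le> (1-e)*p" using e p by simp
  have B0: "0 \<le> e * s" using e s0 by simp
  have prod: "sqrt ((1-e)*p) * sqrt (e * s) = sqrt (((1-e)*p)*(e*q) - (1-e)*e*cc)"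
  proof -
    have "((1-e)*p)*(e * s) = ((1-e)*p)*(e*q) - (1-e)*e*cc"
    proof -
      have "((1-e)*p)*(e * s) = (1-e)*e*(p * s)" by (simp add: algebra_simps)
      also have "\<dots> = (1-e)*e*(p*q - cc)" by (simp only: ps)
      also have "\<dots> = ((1-e)*p)*(e*q) - (1-e)*e*cc" by (simp add: algebra_simps)
      finally show ?thesis .
    qed
    then show ?thesis by (simp add: real_sqrt_mult[symmetric])
  qed
  have "(sqrt ((1-e)*p) + sqrt (e * s))^2 = (1-e)*p + e * s + 2 * (sqrt ((1-e)*p) * sqrt (e * s))"
    using A0 B0 by (simp add: power2_sum)
  also have "\<dots> \<le> (1-e)*p + e*q + 2 * sqrt (((1-e)*p)*(e*q) - (1-e)*e*cc)"
    using sq e by (simp add: prod mult_left_mono)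
  finally show ?thesis unfolding s_def[symmetric]
    using A0 B0 by (intro real_le_rsqrt) simp
qed

lemma cinner_axis_right: "cinner y (axis i 1) = cnj (y $ i)"
  by (simp add: cinner_commute[of y] cinner_axis)

lemma cinner_scaleR_both: "cinner (a *\<^sub>R x) ((\<rho>::complex^'n^'n) *v (b *\<^sub>R y)) = of_real (a*b) * cinner x (\<rho> *v y)"
  by (simp add: mat_vec_scaleR cinner_scaleR_left cinner_scaleR_right)

definition sfun :: "complex^'n \<Rightarrow> 'n \<Rightarrow> complex^'n^'n \<Rightarrow> real" where
  "sfun \<psi> i \<rho> = Re (\<rho> $ i $ i) - (cmod ((\<rho> *v \<psi>) $ i))^2 / Re (cinner \<psi> (\<rho> *v \<psi>))"

definition tau :: "real \<Rightarrow> complex^'n \<Rightarrow> 'n \<Rightarrow> complex^'n^'n" where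
  "tau e \<psi> i = outer (sqrt (1-e) *\<^sub>R \<psi>) (sqrt (1-e) *\<^sub>R \<psi>) + outer (sqrt e *\<^sub>R axis i 1) (sqrt e *\<^sub>R axis i 1)"

lemma tau_density:
  assumes "cinner \<psi> \<psi> = 1" "0 \<le> e" "e \<le> 1"
  shows "density_matrix (tau e \<psi> i)"
proof -
  have "psd (tau e \<psi> i)" unfolding tau_def by (intro psd_add psd_outer)
  moreover have "trace (tau e \<psi> i) = 1"
    using assms by (simp add: tau_def trace_add trace_outer cinner_scaleR_left cinner_scaleR_right cinner_axis
        flip: of_real_mult)
  ultimately show ?thesis by (simp add: density_matrix_def)
qed

lemma infid_pure:
  fixes \<rho> :: "complex^'n^'n"
  assumes p: "psd \<rho>"
  shows "infidelity \<rho> (outer \<psi> \<psi>) = 1 - sqrt (Re (cinner \<psi> (\<rho> *v \<psi>)))"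
proof -
  have "outer \<psi> \<psi> = outer \<psi> \<psi> + outer 0 0" by (simp add: outer_def vec_eq_iff)
  then show ?thesis using infid_formula[OF p, of \<psi> 0] by simp
qed

lemma infid_tau_formula:
  fixes \<rho> :: "complex^'n^'n"
  assumes p: "psd \<rho>" and e: "0 \<le> e" "e \<le> 1"
  shows "infidelity \<rho> (tau e \<psi> i) = 1 - sqrt ((1-e) * Re (cinner \<psi> (\<rho> *v \<psi>)) + e * Re (\<rho> $ i $ i)
      + 2 * sqrt (((1-e) * Re (cinner \<psi> (\<rho> *v \<psi>))) * (e * Re (\<rho> $ i $ i))
                  - (1-e) * e * (cmod ((\<rho> *v \<psi>) $ i))^2))"
proof -
  have h: "adjoint_mat \<rho> = \<rho>" using p by (simp add: psd_def)
  have c: "cinner \<psi> (\<rho> *v axis i 1) = cnj ((\<rho> *v \<psi>) $ i)"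
    by (simp add: herm_cinner[OF h] cinner_axis_right)
  have s1: "sqrt (1-e) * sqrt (1-e) = 1-e" using e by simp
  have s2: "sqrt e * sqrt e = e" using e by simp
  have s3: "(cmod (complex_of_real (sqrt (1-e) * sqrt e) * cnj ((\<rho> *v \<psi>) $ i)))^2
      = (1-e) * e * (cmod ((\<rho> *v \<psi>) $ i))^2"
    using e by (simp add: norm_mult power_mult_distrib real_sqrt_mult[symmetric])
  show ?thesis
    unfolding tau_def infid_formula[OF p] cinner_scaleR_both c axis_quad s1 s2 s3
    by simp
qed

lemma infid_tau:
  fixes \<rho> :: "complex^'n^'n"
  assumes d: "density_matrix \<rho>" and u: "cinner \<psi> \<psi> = 1" and e: "0 \<le> e" "e \<le> 1"
  shows "infidelity \<rho> (tau e \<psi> i) \<le> infidelity \<rho> (outer \<psi> \<psi>) + e - sqrt (e * sfun \<psi> i \<rho>)"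
proof -
  have p: "psd \<rho>" using d by (simp add: density_matrix_def)
  have h: "adjoint_mat \<rho> = \<rho>" using p by (simp add: psd_def)
  define pp where "pp = Re (cinner \<psi> (\<rho> *v \<psi>))"
  define q where "q = Re (\<rho> $ i $ i)"
  define cc where "cc = (cmod ((\<rho> *v \<psi>) $ i))^2"
  have pp0: "0 \<le> pp" using psd_quad[OF p] by (simp add: pp_def)
  have pp1: "pp \<le> 1" using unit_quad_le1[OF d u] by (simp add: pp_def)
  have q0: "0 \<le> q" using psd_diag(2)[OF p] by (simp add: q_def)
  have cc0: "0 \<le> cc" by (simp add: cc_def)
  have ccle: "cc \<le> pp * q"
  proof -
    have c: "cinner \<psi> (\<rho> *v axis i 1) = cnj ((\<rho> *v \<psi>) $ i)"
      by (simp add: herm_cinner[OF h] cinner_axis_right)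
    show ?thesis using psd_cs[OF p, of \<psi> "axis i 1"] by (simp add: c axis_quad cc_def pp_def q_def)
  qed
  have F: "infidelity \<rho> (tau e \<psi> i) = 1 - sqrt ((1-e)*pp + e*q + 2 * sqrt (((1-e)*pp)*(e*q) - (1-e)*e*cc))"
    unfolding infid_tau_formula[OF p e] pp_def q_def cc_def ..
  have low: "sqrt ((1-e)*pp) + sqrt (e * (q - cc/pp)) \<le> sqrt ((1-e)*pp + e*q + 2 * sqrt (((1-e)*pp)*(e*q) - (1-e)*e*cc))"
    by (rule fid_lower[OF pp0 q0 cc0 ccle e])
  have "sqrt pp - e \<le> sqrt ((1-e)*pp)"
  proof -
    have "sqrt (1-e) \<ge> 1-e" using e by (simp add: real_le_rsqrt power2_eq_square mult_le_cancel_left1 mult_left_le)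
    then have "(1-e) * sqrt pp \<le> sqrt (1-e) * sqrt pp" by (rule mult_right_mono) (use pp0 in simp)
    moreover have "e * sqrt pp \<le> e" using pp1 pp0 e by (simp add: mult_left_le)
    moreover have "sqrt ((1-e)*pp) = sqrt (1-e) * sqrt pp" by (simp add: real_sqrt_mult)
    ultimately show ?thesis by (simp add: algebra_simps)
  qed
  moreover have "sfun \<psi> i \<rho> = q - cc/pp" by (simp add: sfun_def q_def cc_def pp_def)
  ultimately show ?thesis using F low infid_pure[OF p, of \<psi>] by (simp add: pp_def[symmetric])
qed

lemma sfun_nonneg:
  fixes \<rho> :: "complex^'n^'n"
  assumes p: "psd \<rho>"
  shows "0 \<le> sfun \<psi> i \<rho>"
proof -
  have h: "adjoint_mat \<rho> = \<rho>" using p by (simp add: psd_def)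
  have c: "cinner \<psi> (\<rho> *v axis i 1) = cnj ((\<rho> *v \<psi>) $ i)"
    by (simp add: herm_cinner[OF h] cinner_axis_right)
  have cs: "(cmod ((\<rho> *v \<psi>) $ i))^2 \<le> Re (cinner \<psi> (\<rho> *v \<psi>)) * Re (\<rho> $ i $ i)"
    using psd_cs[OF p, of \<psi> "axis i 1"] by (simp add: c axis_quad)
  show ?thesis
  proof (cases "Re (cinner \<psi> (\<rho> *v \<psi>)) = 0")
    case True then show ?thesis using psd_diag(2)[OF p] by (simp add: sfun_def)
  next
    case False
    then have "Re (cinner \<psi> (\<rho> *v \<psi>)) > 0" using psd_quad[OF p, of \<psi>] by simp
    then show ?thesis using cs by (simp add: sfun_def divide_le_eq mult.commute)
  qed
qed

lemma sum_sfun: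
  fixes \<rho> :: "complex^'n^'n"
  assumes d: "density_matrix \<rho>"
  shows "(\<Sum>i\<in>UNIV. sfun \<psi> i \<rho>) = 1 - Re (cinner (\<rho> *v \<psi>) (\<rho> *v \<psi>)) / Re (cinner \<psi> (\<rho> *v \<psi>))"
proof -
  have tr: "trace \<rho> = 1" using d by (simp add: density_matrix_def)
  have "(\<Sum>i\<in>UNIV. Re (\<rho> $ i $ i)) = 1" using tr by (simp add: trace_def flip: Re_sum)
  moreover have "(\<Sum>i\<in>UNIV. (cmod ((\<rho> *v \<psi>) $ i))^2) = Re (cinner (\<rho> *v \<psi>) (\<rho> *v \<psi>))"
    by (simp add: cinner_self)
  ultimately show ?thesis by (simp add: sfun_def sum_subtractf flip: sum_divide_distrib)
qed

lemma cont_adjoint: "continuous_on S (adjoint_mat :: complex^'n^'n \<Rightarrow> _)"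
  unfolding adjoint_mat_def by (intro continuous_on_vec_lambda continuous_intros)

lemma cont_quad_mat: "continuous_on S (\<lambda>A::complex^'n^'n. Re (cinner x (A *v x)))"
  unfolding cinner_def matrix_vector_mult_def vec_lambda_beta by (intro continuous_intros)

lemma closed_psd: "closed {A::complex^'n^'n. psd A}"
proof -
  have "{A::complex^'n^'n. psd A} = {A. adjoint_mat A = A} \<inter> (\<Inter>x. {A. 0 \<le> Re (cinner x (A *v x))})"
    by (auto simp: psd_def)
  moreover have "closed {A::complex^'n^'n. adjoint_mat A = A}"
    by (rule closed_Collect_eq[OF cont_adjoint continuous_on_id])
  moreover have "closed (\<Inter>x. {A::complex^'n^'n. 0 \<le> Re (cinner x (A *v x))})"
    by (rule closed_INT) (intro ballI closed_Collect_le[OF continuous_on_const cont_quad_mat])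
  ultimately show ?thesis by (simp only: closed_Int)
qed

lemma quad_pert:
  fixes A :: "complex^'n^'n"
  shows "cmod (cinner x (A *v x)) \<le> real (CARD('n))^2 * norm A * (norm x)^2"
proof -
  have "cmod (cinner x (A *v x)) = cmod (\<Sum>i\<in>UNIV. cnj (x$i) * (\<Sum>j\<in>UNIV. A$i$j * x$j))"
    by (simp add: cinner_def matrix_vector_mult_def)
  also have "\<dots> \<le> (\<Sum>i\<in>UNIV. cmod (x$i) * (\<Sum>j\<in>UNIV. cmod (A$i$j) * cmod (x$j)))"
    by (rule order_trans[OF norm_sum]) (auto intro!: sum_mono mult_left_mono order_trans[OF norm_sum]
        simp: norm_mult)
  also have "\<dots> \<le> (\<Sum>i\<in>(UNIV::'n set). norm x * (\<Sum>j\<in>(UNIV::'n set). norm A * norm x))"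
  proof (rule sum_mono)
    fix i
    have s: "(\<Sum>j\<in>UNIV. cmod (A$i$j) * cmod (x$j)) \<le> (\<Sum>j\<in>(UNIV::'n set). norm A * norm x)"
    proof (rule sum_mono)
      fix j
      have a: "cmod (A$i$j) \<le> norm A" using Finite_Cartesian_Product.norm_nth_le[where x="A $ i" and i=j] Finite_Cartesian_Product.norm_nth_le[where x=A and i=i] by linarith
      show "cmod (A$i$j) * cmod (x$j) \<le> norm A * norm x"
        by (rule mult_mono[OF a Finite_Cartesian_Product.norm_nth_le]) simp_all
    qed
    show "cmod (x$i) * (\<Sum>j\<in>UNIV. cmod (A$i$j) * cmod (x$j)) \<le> norm x * (\<Sum>j\<in>(UNIV::'n set). norm A * norm x)"
      by (rule mult_mono[OF Finite_Cartesian_Product.norm_nth_le s]) (auto intro: sum_nonneg)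
  qed
  also have "\<dots> = real (CARD('n))^2 * norm A * (norm x)^2" by (simp add: power2_eq_square)
  finally show ?thesis .
qed

lemma psd_set_borel: "{A::complex^'n^'n. psd A} \<in> sets borel"
  by (rule borel_closed[OF closed_psd])

lemma meas_infid_tau:
  assumes e: "0 \<le> e" "e \<le> 1"
  shows "(\<lambda>\<rho>::complex^'n^'n. infidelity \<rho> (tau e \<psi> i)) \<in> borel_measurable borel"
proof -
  define F where "F = (\<lambda>\<rho>::complex^'n^'n. 1 - sqrt ((1-e) * Re (cinner \<psi> (\<rho> *v \<psi>)) + e * Re (\<rho> $ i $ i)
      + 2 * sqrt (((1-e) * Re (cinner \<psi> (\<rho> *v \<psi>))) * (e * Re (\<rho> $ i $ i))
                  - (1-e) * e * (cmod ((\<rho> *v \<psi>) $ i))^2)))"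
  have eq: "(\<lambda>\<rho>. infidelity \<rho> (tau e \<psi> i)) = (\<lambda>\<rho>. if \<rho> \<in> {A. psd A} then F \<rho> else 1)"
    by (rule ext) (simp add: F_def infid_tau_formula[OF _ e] infid_nonpsd)
  have "continuous_on UNIV F"
    unfolding F_def cinner_def matrix_vector_mult_def vec_lambda_beta by (intro continuous_intros)
  then have "F \<in> borel_measurable borel" by (rule borel_measurable_continuous_onI)
  then show ?thesis unfolding eq
    by (intro measurable_If_set) (auto simp: psd_set_borel)
qed

lemma meas_infid_pure:
  shows "(\<lambda>\<rho>::complex^'n^'n. infidelity \<rho> (outer \<psi> \<psi>)) \<in> borel_measurable borel"
proof -
  define F where "F = (\<lambda>\<rho>::complex^'n^'n. 1 - sqrt (Re (cinner \<psi> (\<rho> *v \<psi>))))"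
  have eq: "(\<lambda>\<rho>. infidelity \<rho> (outer \<psi> \<psi>)) = (\<lambda>\<rho>. if \<rho> \<in> {A. psd A} then F \<rho> else 1)"
    by (rule ext) (simp add: F_def infid_pure infid_nonpsd)
  have "continuous_on UNIV F"
    unfolding F_def cinner_def matrix_vector_mult_def vec_lambda_beta by (intro continuous_intros)
  then have "F \<in> borel_measurable borel" by (rule borel_measurable_continuous_onI)
  then show ?thesis unfolding eq
    by (intro measurable_If_set) (auto simp: psd_set_borel)
qed

lemma meas_sfun: "(\<lambda>\<rho>::complex^'n^'n. sfun \<psi> i \<rho>) \<in> borel_measurable borel"
proof -
  have c1: "continuous_on UNIV (\<lambda>\<rho>::complex^'n^'n. Re (\<rho> $ i $ i))" by (intro continuous_intros)
  have c2: "continuous_on UNIV (\<lambda>\<rho>::complex^'n^'n. (cmod ((\<rho> *v \<psi>) $ i))^2)"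
    unfolding matrix_vector_mult_def vec_lambda_beta by (intro continuous_intros)
  have c3: "continuous_on UNIV (\<lambda>\<rho>::complex^'n^'n. Re (cinner \<psi> (\<rho> *v \<psi>)))"
    unfolding cinner_def matrix_vector_mult_def vec_lambda_beta by (intro continuous_intros)
  show ?thesis unfolding sfun_def
    by (intro borel_measurable_diff borel_measurable_divide borel_measurable_continuous_onI c1 c2 c3)
qed

lemma infid_pure_bound:
  fixes \<rho> :: "complex^'n^'n"
  assumes d: "density_matrix \<rho>" and u: "cinner \<psi> \<psi> = 1"
  shows "\<bar>infidelity \<rho> (outer \<psi> \<psi>)\<bar> \<le> 3"
proof -
  have p: "psd \<rho>" using d by (simp add: density_matrix_def)
  have "0 \<le> Re (cinner \<psi> (\<rho> *v \<psi>))" by (rule psd_quad[OF p])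
  moreover have "Re (cinner \<psi> (\<rho> *v \<psi>)) \<le> 1" by (rule unit_quad_le1[OF d u])
  ultimately have "sqrt (Re (cinner \<psi> (\<rho> *v \<psi>))) \<le> 1" "0 \<le> sqrt (Re (cinner \<psi> (\<rho> *v \<psi>)))" by simp_all
  then show ?thesis unfolding infid_pure[OF p] by (intro abs_leI) linarith+
qed

lemma infid_tau_bound:
  fixes \<rho> :: "complex^'n^'n"
  assumes d: "density_matrix \<rho>" and u: "cinner \<psi> \<psi> = 1" and e: "0 \<le> e" "e \<le> 1"
  shows "\<bar>infidelity \<rho> (tau e \<psi> i)\<bar> \<le> 3"
proof -
  have p: "psd \<rho>" using d by (simp add: density_matrix_def)
  define pp where "pp = Re (cinner \<psi> (\<rho> *v \<psi>))"
  define q where "q = Re (\<rho> $ i $ i)"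
  define cc where "cc = (cmod ((\<rho> *v \<psi>) $ i))^2"
  have pp0: "0 \<le> pp" "pp \<le> 1" using psd_quad[OF p] unit_quad_le1[OF d u] by (simp_all add: pp_def)
  have q0: "0 \<le> q" "q \<le> 1"
    using psd_diag(2)[OF p] unit_quad_le1[OF d, of "axis i 1"] by (simp_all add: q_def axis_quad cinner_axis mat_axis)
  have cc0: "0 \<le> cc" by (simp add: cc_def)
  have A: "0 \<le> (1-e)*pp" "(1-e)*pp \<le> 1" using pp0 e by (simp_all add: mult_le_one)
  have B: "0 \<le> e*q" "e*q \<le> 1" using q0 e by (simp_all add: mult_le_one)
  have "((1-e)*pp)*(e*q) - (1-e)*e*cc \<le> 1"
  proof -
    have "((1-e)*pp)*(e*q) \<le> 1" using A B by (simp add: mult_le_one)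
    moreover have "0 \<le> (1-e)*e*cc" using e cc0 by simp
    ultimately show ?thesis by linarith
  qed
  then have "sqrt (((1-e)*pp)*(e*q) - (1-e)*e*cc) \<le> 1" by simp
  then have "(1-e)*pp + e*q + 2 * sqrt (((1-e)*pp)*(e*q) - (1-e)*e*cc) \<le> 4" using A B by linarith
  then have "sqrt ((1-e)*pp + e*q + 2 * sqrt (((1-e)*pp)*(e*q) - (1-e)*e*cc)) \<le> sqrt 4"
    by (rule real_sqrt_le_mono)
  moreover have "sqrt (4::real) = 2" by (simp add: real_sqrt_eq_iff)
  ultimately have "sqrt ((1-e)*pp + e*q + 2 * sqrt (((1-e)*pp)*(e*q) - (1-e)*e*cc)) \<le> 2" by simp
  moreover have "0 \<le> sqrt ((1-e)*pp + e*q + 2 * sqrt (((1-e)*pp)*(e*q) - (1-e)*e*cc))"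
  proof -
    have h: "adjoint_mat \<rho> = \<rho>" using p by (simp add: psd_def)
    have c: "cinner \<psi> (\<rho> *v axis i 1) = cnj ((\<rho> *v \<psi>) $ i)"
      by (simp add: herm_cinner[OF h] cinner_axis_right)
    have "cc \<le> pp * q" using psd_cs[OF p, of \<psi> "axis i 1"] by (simp add: c axis_quad cc_def pp_def q_def)
    then have "(1-e)*e*cc \<le> (1-e)*e*(pp*q)" using e by (simp add: mult_left_mono)
    then have "0 \<le> ((1-e)*pp)*(e*q) - (1-e)*e*cc" by (simp add: algebra_simps)
    then show ?thesis using A B by simp
  qed
  ultimately show ?thesis
    unfolding infid_tau_formula[OF p e] pp_def[symmetric] q_def[symmetric] cc_def[symmetric]
    by (intro abs_leI) linarith+
qed

theorem lemma2:
  fixes M :: "(complex^'n^'n) measure"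
  assumes "prob_space M"
    and "sets M = sets borel"
    and "AE \<rho> in M. density_matrix \<rho>"
    and "\<exists>\<rho>\<in>measure_support M. mixed_state \<rho>"
  shows "\<not> (\<exists>\<sigma>. pure_state \<sigma> \<and> bayes_estimator M \<sigma>)"
proof
  assume "\<exists>\<sigma>. pure_state \<sigma> \<and> bayes_estimator M \<sigma>"
  then obtain \<sigma> where ps: "pure_state \<sigma>" and be: "bayes_estimator M \<sigma>" by blast
  obtain \<psi> where \<sigma>\<psi>: "\<sigma> = outer \<psi> \<psi>" and u: "cinner \<psi> \<psi> = 1" using pure_outer[OF ps] by blast
  interpret P: prob_space M by fact
  have sp: "space M = UNIV" using sets_eq_imp_space_eq[OF assms(2)] by simp
  have meas: "f \<in> borel_measurable M" if "f \<in> borel_measurable borel" for f :: "_ \<Rightarrow> real"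
    using that measurable_cong_sets[OF assms(2) refl] by blast
  have setsM: "A \<in> sets M" if "A \<in> sets borel" for A using that assms(2) by simp
  obtain \<rho>0 where supp: "\<rho>0 \<in> measure_support M" and mx: "mixed_state \<rho>0" using assms(4) by blast
  obtain L0 where L0: "L0 < 1" "\<forall>x. Re (cinner x (\<rho>0 *v x)) \<le> L0 * (norm x)^2"
    using mixed_bound[OF mx] by blast
  define L where "L = max L0 0"
  have L: "0 \<le> L" "L < 1" using L0 by (auto simp: L_def)
  have Lb: "Re (cinner x (\<rho>0 *v x)) \<le> L * (norm x)^2" for x
  proof -
    have "L0 * (norm x)^2 \<le> L * (norm x)^2" by (rule mult_right_mono) (simp_all add: L_def)
    then show ?thesis using L0(2) by (meson order_trans)
  qed
  define N where "N = real (CARD('n))^2"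
  have N: "N \<ge> 1" by (simp add: N_def)
  define r where "r = (1 - L) / (2 * N)"
  have r: "r > 0" using L N by (simp add: r_def)
  define L' where "L' = (1 + L) / 2"
  have ball_bound: "\<forall>x. Re (cinner x (\<rho> *v x)) \<le> L' * (norm x)^2" if b: "\<rho> \<in> ball \<rho>0 r" for \<rho>
  proof
    fix x
    have nr: "norm (\<rho> - \<rho>0) < r" using b by (simp add: dist_norm norm_minus_commute)
    have e1: "Re (cinner x (\<rho> *v x)) = Re (cinner x (\<rho>0 *v x)) + Re (cinner x ((\<rho> - \<rho>0) *v x))"
      by (simp add: matrix_vector_mult_diff_rdistrib cinner_diff_right)
    have e2: "Re (cinner x ((\<rho> - \<rho>0) *v x)) \<le> N * norm (\<rho> - \<rho>0) * (norm x)^2"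
      using quad_pert[of x "\<rho> - \<rho>0"] abs_Re_le_cmod[of "cinner x ((\<rho> - \<rho>0) *v x)"]
      by (simp add: N_def)
    have e3: "N * norm (\<rho> - \<rho>0) * (norm x)^2 \<le> N * r * (norm x)^2"
      using nr N by (intro mult_right_mono mult_left_mono) simp_all
    have e4: "N * r = (1 - L) / 2" using N by (simp add: r_def)
    have X: "Re (cinner x (\<rho> *v x)) \<le> Re (cinner x (\<rho>0 *v x)) + (1 - L) / 2 * (norm x)^2"
      using e1 e2 e3 e4 by simp
    have "L' * (norm x)^2 = L * (norm x)^2 + (1 - L) / 2 * (norm x)^2" by (simp add: L'_def field_simps)
    then show "Re (cinner x (\<rho> *v x)) \<le> L' * (norm x)^2" using X Lb[of x] by linarith
  qed
  have Bpos: "emeasure M (ball \<rho>0 r) > 0" using supp r unfolding measure_support_def by auto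
  define \<kappa> where "\<kappa> = (1 - L) / 2"
  define c where "c = \<kappa> / real CARD('n)"
  have c0: "c > 0" using L by (simp add: c_def \<kappa>_def)
  have c1: "c \<le> 1"
  proof -
    have "\<kappa> \<le> 1" using L by (simp add: \<kappa>_def)
    moreover have "real CARD('n) \<ge> 1" by simp
    ultimately have "\<kappa> \<le> real CARD('n)" by linarith
    then show ?thesis unfolding c_def by (simp add: divide_le_eq)
  qed
  define W where "W i = ball \<rho>0 r \<inter> (sfun \<psi> i -` {c..})" for i
  have Wsets: "W i \<in> sets M" for i
  proof -
    have "sfun \<psi> i -` {c..} \<inter> space borel \<in> sets borel"
      by (rule measurable_sets[OF meas_sfun]) simp
    then show ?thesis unfolding W_def by (intro setsM) auto
  qed
  have cover: "AE \<rho> in M. \<rho> \<in> ball \<rho>0 r \<longrightarrow> (\<exists>i. \<rho> \<in> W i)"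
    using assms(3)
  proof eventually_elim
    fix \<rho> :: "complex^'n^'n" assume d: "density_matrix \<rho>"
    show "\<rho> \<in> ball \<rho>0 r \<longrightarrow> (\<exists>i. \<rho> \<in> W i)"
    proof
      assume b: "\<rho> \<in> ball \<rho>0 r"
      have p: "psd \<rho>" using d by (simp add: density_matrix_def)
      have rb: "Re (cinner (\<rho> *v \<psi>) (\<rho> *v \<psi>)) \<le> L' * Re (cinner \<psi> (\<rho> *v \<psi>))"
        by (rule rho_psi_bound[OF p ball_bound[OF b]])
      have rat: "Re (cinner (\<rho> *v \<psi>) (\<rho> *v \<psi>)) / Re (cinner \<psi> (\<rho> *v \<psi>)) \<le> L'"
      proof (cases "Re (cinner \<psi> (\<rho> *v \<psi>)) = 0")
        case True then show ?thesis using L by (simp add: L'_def)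
      next
        case False
        then have "Re (cinner \<psi> (\<rho> *v \<psi>)) > 0" using psd_quad[OF p, of \<psi>] by simp
        then show ?thesis using rb by (simp add: divide_le_eq)
      qed
      have sumk: "(\<Sum>i\<in>UNIV. sfun \<psi> i \<rho>) \<ge> \<kappa>"
        using sum_sfun[OF d, of \<psi>] rat by (simp add: L'_def \<kappa>_def)
      have "\<exists>i. c \<le> sfun \<psi> i \<rho>"
      proof (rule ccontr)
        assume "\<not> ?thesis"
        then have "\<And>i. sfun \<psi> i \<rho> < c" by (simp add: not_le)
        then have "(\<Sum>i\<in>UNIV. sfun \<psi> i \<rho>) < (\<Sum>i\<in>(UNIV::'n set). c)"
          by (intro sum_strict_mono) auto
        also have "\<dots> = \<kappa>" by (simp add: c_def)
        finally show False using sumk by simp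
      qed
      then show "\<exists>i. \<rho> \<in> W i" using b by (auto simp: W_def)
    qed
  qed
  have "\<exists>i. emeasure M (W i) > 0"
  proof (rule ccontr)
    assume "\<not> ?thesis"
    then have z: "emeasure M (W i) = 0" for i by (simp add: not_less)
    have "AE \<rho> in M. \<rho> \<notin> W i" for i
      by (rule AE_not_in) (simp add: null_sets_def Wsets z)
    then have "AE \<rho> in M. \<forall>i\<in>UNIV. \<rho> \<notin> W i" by (intro AE_finite_allI) auto
    with cover have "AE \<rho> in M. \<rho> \<notin> ball \<rho>0 r" by eventually_elim auto
    moreover have "ball \<rho>0 r \<in> sets M" by (intro setsM) simp
    ultimately have "emeasure M (ball \<rho>0 r) = 0"
    proof -
      have "{x \<in> space M. \<not> (x \<notin> ball \<rho>0 r)} = ball \<rho>0 r" by (auto simp: sp)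
      from AE_iff_measurable[OF \<open>ball \<rho>0 r \<in> sets M\<close> this] show ?thesis
        using \<open>AE \<rho> in M. \<rho> \<notin> ball \<rho>0 r\<close> by simp
    qed
    with Bpos show False by simp
  qed
  then obtain i where Wpos: "emeasure M (W i) > 0" by blast
  define m where "m = measure M (W i)"
  have m0: "m > 0" using Wpos by (simp add: m_def P.emeasure_eq_measure)
  have m1: "m \<le> 1" by (simp add: m_def)
  define e where "e = (m * sqrt c / 2)^2"
  have se: "sqrt e = m * sqrt c / 2" using m0 c0 by (simp add: e_def)
  have e0: "e > 0" using m0 c0 by (simp add: e_def)
  have e1: "e \<le> 1"
  proof -
    have "m * sqrt c \<le> 1 * 1" using m0 m1 c0 c1 by (intro mult_mono) simp_all
    then have "m * sqrt c / 2 \<le> 1" by simp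
    moreover have "0 \<le> m * sqrt c / 2" using m0 c0 by simp
    ultimately show ?thesis unfolding e_def by (simp add: power_le_one)
  qed
  have key: "sqrt e * sqrt c * m = 2 * e"
  proof -
    have cc: "sqrt c * sqrt c = c" using c0 by simp
    show ?thesis unfolding se unfolding e_def power2_eq_square
      by (simp add: algebra_simps cc)
  qed
  define \<tau> where "\<tau> = tau e \<psi> i"
  have d\<tau>: "density_matrix \<tau>" unfolding \<tau>_def by (rule tau_density[OF u]) (use e0 e1 in simp_all)
  define g0 where "g0 = (\<lambda>\<rho>. infidelity \<rho> \<sigma>)"
  define g1 where "g1 = (\<lambda>\<rho>. infidelity \<rho> \<tau>)"
  have mg0: "g0 \<in> borel_measurable M" unfolding g0_def \<sigma>\<psi> by (rule meas[OF meas_infid_pure])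
  have mg1: "g1 \<in> borel_measurable M" unfolding g1_def \<tau>_def
    by (rule meas[OF meas_infid_tau]) (use e0 e1 in simp_all)
  have ig0: "integrable M g0"
    by (rule P.integrable_const_bound[where B=3]) (use assms(3) mg0 in \<open>auto simp: g0_def \<sigma>\<psi> elim!: eventually_mono intro: infid_pure_bound[OF _ u]\<close>)
  have ig1: "integrable M g1"
    by (rule P.integrable_const_bound[where B=3]) (use assms(3) mg1 e0 e1 in \<open>auto simp: g1_def \<tau>_def elim!: eventually_mono intro: infid_tau_bound[OF _ u]\<close>)
  have iind: "integrable M (indicator (W i) :: _ \<Rightarrow> real)"
    by (rule integrable_real_indicator) (simp_all add: Wsets less_top[symmetric])
  have pw: "AE \<rho> in M. g1 \<rho> \<le> g0 \<rho> + e - (sqrt e * sqrt c) * indicator (W i) \<rho>"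
    using assms(3)
  proof eventually_elim
    fix \<rho> :: "complex^'n^'n" assume d: "density_matrix \<rho>"
    have p: "psd \<rho>" using d by (simp add: density_matrix_def)
    have it: "g1 \<rho> \<le> g0 \<rho> + e - sqrt (e * sfun \<psi> i \<rho>)"
      unfolding g1_def g0_def \<tau>_def \<sigma>\<psi> by (rule infid_tau[OF d u]) (use e0 e1 in simp_all)
    show "g1 \<rho> \<le> g0 \<rho> + e - (sqrt e * sqrt c) * indicator (W i) \<rho>"
    proof (cases "\<rho> \<in> W i")
      case True
      then have "c \<le> sfun \<psi> i \<rho>" by (simp add: W_def)
      then have "sqrt e * sqrt c \<le> sqrt (e * sfun \<psi> i \<rho>)"
        using e0 by (simp add: real_sqrt_mult mult_left_mono)
      then show ?thesis using it True by simp
    next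
      case False
      have "0 \<le> sqrt (e * sfun \<psi> i \<rho>)" using sfun_nonneg[OF p, of \<psi> i] e0 by simp
      moreover have "g0 \<rho> + e - (sqrt e * sqrt c) * indicator (W i) \<rho> = g0 \<rho> + e" using False by simp
      ultimately show ?thesis using it by linarith
    qed
  qed
  have "bayes_risk M \<tau> = integral\<^sup>L M g1" by (simp add: bayes_risk_def g1_def)
  also have "\<dots> \<le> integral\<^sup>L M (\<lambda>\<rho>. g0 \<rho> + e - (sqrt e * sqrt c) * indicator (W i) \<rho>)"
    by (rule integral_mono_AE[OF ig1 _ pw])
       (intro Bochner_Integration.integrable_diff Bochner_Integration.integrable_add ig0 P.integrable_const
          integrable_mult_right iind)
  also have "\<dots> = integral\<^sup>L M g0 + e - (sqrt e * sqrt c) * m"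
    by (simp add: integral_diff integral_add ig0 iind integrable_mult_right Wsets m_def P.prob_space)
  also have "\<dots> = integral\<^sup>L M g0 - e" using key by simp
  also have "\<dots> < integral\<^sup>L M g0" using e0 by simp
  also have "\<dots> = bayes_risk M \<sigma>" by (simp add: bayes_risk_def g0_def)
  finally have "bayes_risk M \<tau> < bayes_risk M \<sigma>" .
  moreover have "bayes_risk M \<sigma> \<le> bayes_risk M \<tau>" using be d\<tau> by (simp add: bayes_estimator_def)
  ultimately show False by simp
qed

end
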